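(* Let $N\ge1$, $\beta$ a non-negative integer and $\gamma$ a constant. For every $Q$ in the algebra $\mathcal{H}_0'$ and every $f\in\mathbb{C}[x_1,\dots,x_N]$, $$\sigma^B(Qf)=\rho^B(Q)\,\sigma^B(f).$$
   Context: On $\mathbb{C}[x]=\mathbb{C}[x_1,\dots,x_N]$: $s_{ij}$ swaps $x_i,x_j$; $D^A_j=\frac{\partial}{\partial x_j}+\beta\sum_{k\neq j}\frac{1-s_{jk}}{x_j-x_k}$; $\hat D^A_j=x_jD^A_j+\beta\sum_{k<j}s_{jk}$; $\mathcal{H}_0'$ is the operator algebra generated by the $\hat D^A_j$ and $s_{ij}$, and $\widetilde{\mathcal H}'$ the one generated by the $x_j$, $\hat D^A_j$, $s_{ij}$. On functions of $z=(z_1,\dots,z_N)$: $s_{ij}$ swaps $z_i,z_j$; $t_j$ sends $z_j\mapsto -z_j$; $D^B_j=\frac{\partial}{\partial z_j}+\beta\sum_{k\neq j}\left(\frac{1-s_{jk}}{z_j-z_k}+\frac{1-t_jt_ks_{jk}}{z_j+z_k}\right)+\gamma\frac{1-t_j}{z_j}$; $\tilde b^\dagger_j=\frac1{\sqrt2}(-D^B_j+2z_j)$, $\tilde b_j=\frac1{\sqrt2}D^B_j$; $\tilde h^B_j=\tilde b^\dagger_j\tilde b_j+\beta\sum_{k<j}(s_{jk}+t_jt_ks_{jk})$. The operators $(\tilde b^\dagger_j)^2$ and $\tilde h^B_j$ preserve $\mathbb{C}[z^2]=\mathbb{C}[z_1^2,\dots,z_N^2]$. $\rho^B$ is the representation of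 $\widetilde{\mathcal H}'$ on $\mathbb{C}[z^2]$ determined by $\rho^B(x_j)=\tfrac12(\tilde b^\dagger_j)^2$, $\rho^B(\hat D^A_j)=\tfrac12\tilde h^B_j$, $\rho^B(s_{ij})=s_{ij}$. The linear map $\sigma^B:\mathbb{C}[x]\to\mathbb{C}[z^2]$ is $\sigma^B(f)=f\big((\tilde b^\dagger_1)^2/2,\dots,(\tilde b^\dagger_N)^2/2\big)\cdot1$. *)

theory Defs
  imports Complex_Main "HOL-Library.Poly_Mapping"
begin

text \<open>Multivariate polynomials over the complex numbers, in the variables
  indexed by natural numbers (variable number i stands for x_(i+1), resp. z_(i+1)).\<close>

type_synonym mpoly = "(nat \<Rightarrow>\<^sub>0 nat) \<Rightarrow>\<^sub>0 complex"
type_synonym op = "mpoly \<Rightarrow> mpoly"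

definition cst :: "complex \<Rightarrow> mpoly" where
  "cst c = Poly_Mapping.single 0 c"

definition var :: "nat \<Rightarrow> mpoly" where
  "var i = Poly_Mapping.single (Poly_Mapping.single i 1) 1"

definition in_vars :: "nat \<Rightarrow> mpoly \<Rightarrow> bool" where
  "in_vars N p \<longleftrightarrow> (\<forall>m\<in>Poly_Mapping.keys p. \<forall>i\<in>Poly_Mapping.keys m. i < N)"

definition swapv :: "nat \<Rightarrow> nat \<Rightarrow> op" where
  "swapv i j p = Abs_poly_mapping
     (\<lambda>m. Poly_Mapping.lookup p (Abs_poly_mapping (\<lambda>k. Poly_Mapping.lookup m (if k = i then j else if k = j then i else k))))"

definition flipv :: "nat \<Rightarrow> op" where
  "flipv j p = Abs_poly_mapping (\<lambda>m. (-1) ^ Poly_Mapping.lookup m j * Poly_Mapping.lookup p m)"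

definition pderivv :: "nat \<Rightarrow> op" where
  "pderivv j p = Abs_poly_mapping
     (\<lambda>m. of_nat (Poly_Mapping.lookup m j + 1) * Poly_Mapping.lookup p (m + Poly_Mapping.single j 1))"

definition pdivide :: "mpoly \<Rightarrow> mpoly \<Rightarrow> mpoly" where
  "pdivide p l = (THE q. l * q = p)"

definition DA :: "nat \<Rightarrow> nat \<Rightarrow> nat \<Rightarrow> op" where
  "DA \<beta> N j p = pderivv j p
     + cst (of_nat \<beta>) * (\<Sum>k\<in>{k. k < N \<and> k \<noteq> j}. pdivide (p - swapv j k p) (var j - var k))"

definition DhatA :: "nat \<Rightarrow> nat \<Rightarrow> nat \<Rightarrow> op" where
  "DhatA \<beta> N j p = var j * DA \<beta> N j p + cst (of_nat \<beta>) * (\<Sum>k<j. swapv j k p)"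

definition DB :: "nat \<Rightarrow> complex \<Rightarrow> nat \<Rightarrow> nat \<Rightarrow> op" where
  "DB \<beta> \<gamma> N j p = pderivv j p
     + cst (of_nat \<beta>) * (\<Sum>k\<in>{k. k < N \<and> k \<noteq> j}.
          pdivide (p - swapv j k p) (var j - var k)
        + pdivide (p - flipv j (flipv k (swapv j k p))) (var j + var k))
     + cst \<gamma> * pdivide (p - flipv j p) (var j)"

definition bdag :: "nat \<Rightarrow> complex \<Rightarrow> nat \<Rightarrow> nat \<Rightarrow> op" where
  "bdag \<beta> \<gamma> N j p = cst (1 / complex_of_real (sqrt 2)) * (- DB \<beta> \<gamma> N j p + cst 2 * var j * p)"

definition bann :: "nat \<Rightarrow> complex \<Rightarrow> nat \<Rightarrow> nat \<Rightarrow> op" where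
  "bann \<beta> \<gamma> N j p = cst (1 / complex_of_real (sqrt 2)) * DB \<beta> \<gamma> N j p"

definition htB :: "nat \<Rightarrow> complex \<Rightarrow> nat \<Rightarrow> nat \<Rightarrow> op" where
  "htB \<beta> \<gamma> N j p = bdag \<beta> \<gamma> N j (bann \<beta> \<gamma> N j p)
     + cst (of_nat \<beta>) * (\<Sum>k<j. swapv j k p + flipv j (flipv k (swapv j k p)))"

text \<open>The operator (\<tilde>b^\<dagger>_j)^2 / 2, i.e. \<rho>^B(x_j).\<close>
definition Bsq :: "nat \<Rightarrow> complex \<Rightarrow> nat \<Rightarrow> nat \<Rightarrow> op" where
  "Bsq \<beta> \<gamma> N j p = cst (1/2) * bdag \<beta> \<gamma> N j (bdag \<beta> \<gamma> N j p)"

text \<open>\<sigma>^B(f) = f((\<tilde>b^\<dagger>_1)^2/2, ..., (\<tilde>b^\<dagger>_N)^2/2) \<cdot> 1, the monomial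
  x^m being sent to (B_1^{m_1} \<circ> ... \<circ> B_N^{m_N}) 1 (the B_j commute).\<close>
definition mono_op :: "nat \<Rightarrow> complex \<Rightarrow> nat \<Rightarrow> (nat \<Rightarrow>\<^sub>0 nat) \<Rightarrow> op" where
  "mono_op \<beta> \<gamma> N m = foldr (\<lambda>j acc. (Bsq \<beta> \<gamma> N j ^^ Poly_Mapping.lookup m j) \<circ> acc) [0..<N] id"

definition sigmaB :: "nat \<Rightarrow> complex \<Rightarrow> nat \<Rightarrow> mpoly \<Rightarrow> mpoly" where
  "sigmaB \<beta> \<gamma> N f = (\<Sum>m\<in>Poly_Mapping.keys f. cst (Poly_Mapping.lookup f m) * mono_op \<beta> \<gamma> N m 1)"

text \<open>Graph of \<rho>^B restricted to the algebra H_0': the pairs (Q, \<rho>^B(Q)) obtained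
  from the generators (\<hat>D^A_j, \<tilde>h^B_j/2) and (s_ij, s_ij) by the algebra operations.
  The first components are exactly the elements of H_0'.\<close>
inductive_set rhoB_H0 :: "nat \<Rightarrow> complex \<Rightarrow> nat \<Rightarrow> (op \<times> op) set"
  for \<beta> :: nat and \<gamma> :: complex and N :: nat where
  gen_D: "j < N \<Longrightarrow> (DhatA \<beta> N j, \<lambda>p. cst (1/2) * htB \<beta> \<gamma> N j p) \<in> rhoB_H0 \<beta> \<gamma> N"
| gen_s: "i < N \<Longrightarrow> j < N \<Longrightarrow> (swapv i j, swapv i j) \<in> rhoB_H0 \<beta> \<gamma> N"
| unit: "(id, id) \<in> rhoB_H0 \<beta> \<gamma> N"
| add: "(Q1, R1) \<in> rhoB_H0 \<beta> \<gamma> N \<Longrightarrow> (Q2, R2) \<in> rhoB_H0 \<beta> \<gamma> N \<Longrightarrow>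
          (\<lambda>p. Q1 p + Q2 p, \<lambda>p. R1 p + R2 p) \<in> rhoB_H0 \<beta> \<gamma> N"
| scal: "(Q, R) \<in> rhoB_H0 \<beta> \<gamma> N \<Longrightarrow>
          (\<lambda>p. cst c * Q p, \<lambda>p. cst c * R p) \<in> rhoB_H0 \<beta> \<gamma> N"
| comp: "(Q1, R1) \<in> rhoB_H0 \<beta> \<gamma> N \<Longrightarrow> (Q2, R2) \<in> rhoB_H0 \<beta> \<gamma> N \<Longrightarrow>
          (Q1 \<circ> Q2, R1 \<circ> R2) \<in> rhoB_H0 \<beta> \<gamma> N"

end

theory Submission
  imports Defs
begin

lemma mpoly_no_zd: "(a::mpoly) * b = 0 \<Longrightarrow> a = 0 \<or> b = 0" by simp

lemma lookup_mult_single: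
  "Poly_Mapping.lookup (Poly_Mapping.single (k::nat \<Rightarrow>\<^sub>0 nat) a * (p::mpoly)) m =
     (if (\<forall>i. Poly_Mapping.lookup k i \<le> Poly_Mapping.lookup m i) then a * Poly_Mapping.lookup p (m - k) else 0)"
proof -
  have "Poly_Mapping.lookup (Poly_Mapping.single k a * p) m
      = (\<Sum>l. (a when k = l) * (\<Sum>q. Poly_Mapping.lookup p q when m = l + q))"
    by (simp add: lookup_mult lookup_single)
  also have "\<dots> = a * (\<Sum>q. Poly_Mapping.lookup p q when m = k + q)"
    by (simp add: when_mult)
  also have "\<dots> = (if (\<forall>i. Poly_Mapping.lookup k i \<le> Poly_Mapping.lookup m i) then a * Poly_Mapping.lookup p (m - k) else 0)"
  proof (cases "\<forall>i. Poly_Mapping.lookup k i \<le> Poly_Mapping.lookup m i")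
    case True
    have "\<And>q. (m = k + q) = (q = m - k)"
      using True by (auto simp: poly_mapping_eq_iff fun_eq_iff lookup_add lookup_minus)
    then show ?thesis using True by simp
  next
    case False
    have "\<And>q. m \<noteq> k + q"
      using False by (auto simp: lookup_add)
    then have "(\<Sum>q. Poly_Mapping.lookup p q when m = k + q) = 0" by simp
    then show ?thesis by (simp only: if_not_P[OF False]) simp
  qed
  finally show ?thesis .
qed


lemma lookup_cst_mult: "Poly_Mapping.lookup (cst c * p) m = c * Poly_Mapping.lookup p m"
  unfolding cst_def mult_map_scale_conv_mult[symmetric]
  by (simp add: Poly_Mapping.map.rep_eq when_def)

lemma cst_mult: "cst a * cst b = cst (a * b)"
  by (simp add: cst_def mult_single)
lemma cst_1[simp]: "cst 1 = 1" by (simp add: cst_def)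
lemma cst_0[simp]: "cst 0 = 0" by (simp add: cst_def)
lemma cst_add: "cst (a + b) = cst a + cst b" by (simp add: cst_def single_add)
lemma cst_diff: "cst (a - b) = cst a - cst b" by (simp add: cst_def single_diff)
lemma cst_uminus: "cst (- a) = - cst a" by (simp add: cst_def single_uminus)
lemma cst_of_nat: "cst (of_nat n) = of_nat n" by (simp add: cst_def)
lemma cst_numeral: "cst (numeral n) = numeral n" by (simp add: cst_def)
lemma cst_mult_numeral: "cst a * numeral n = cst (a * numeral n)"
  by (simp add: cst_numeral[symmetric] cst_mult)

lemma var_power: "var l ^ n = Poly_Mapping.single (Poly_Mapping.single l n) 1"
  by (induction n) (simp_all add: var_def mult_single single_add[symmetric] add.commute)

definition vars_in :: "nat set \<Rightarrow> mpoly \<Rightarrow> bool" where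
  "vars_in V p \<longleftrightarrow> (\<forall>m\<in>Poly_Mapping.keys p. Poly_Mapping.keys m \<subseteq> V)"

lemma in_vars_eq: "in_vars N p = vars_in {..<N} p"
  by (auto simp: in_vars_def vars_in_def)

lemma vars_in_UNIV[simp]: "vars_in UNIV p" by (simp add: vars_in_def)

lemma update_eq_add: "a \<notin> Poly_Mapping.keys f \<Longrightarrow> Poly_Mapping.update a b f = f + Poly_Mapping.single a (b::nat)"
  by (rule poly_mapping_eqI) (auto simp: lookup_update lookup_add lookup_single in_keys_iff when_def)

lemma mono_induct:
  assumes "Poly_Mapping.keys m \<subseteq> V"
    and cst: "\<And>c. P (cst c)"
    and var: "\<And>l p. l \<in> V \<Longrightarrow> vars_in V p \<Longrightarrow> P p \<Longrightarrow> P (var l * p)"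
  shows "P (Poly_Mapping.single m c)"
  using assms(1)
proof (induction m arbitrary: c rule: update_induct)
  case const
  then show ?case using cst by (simp add: cst_def)
next
  case (update f a b)
  have ak: "a \<in> V" "Poly_Mapping.keys f \<subseteq> V"
    using update.prems update.hyps by (auto simp: keys_update)
  have "P (var a ^ n * Poly_Mapping.single f c)" for n
  proof (induction n)
    case 0 then show ?case using update.IH ak by simp
  next
    case (Suc n)
    have "vars_in V (var a ^ n * Poly_Mapping.single f c)"
      using ak keys_add[of "Poly_Mapping.single a n" f] by (auto simp: var_power mult_single vars_in_def split: if_splits)
    then show ?case using var[OF ak(1) _ Suc] by (simp add: mult.assoc)
  qed
  then show ?case using update.hyps
    by (simp add: update_eq_add var_power mult_single add.commute)
qed

lemma poly_expand: "p = (\<Sum>m\<in>Poly_Mapping.keys p. Poly_Mapping.single m (Poly_Mapping.lookup p m))"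
  by (rule poly_mapping_eqI)
     (simp add: lookup_sum lookup_single when_def in_keys_iff)

lemma mpoly_induct[consumes 1, case_names cst add var]:
  assumes "vars_in V p"
    and cst: "\<And>c. P (cst c)"
    and add: "\<And>p q. P p \<Longrightarrow> P q \<Longrightarrow> P (p + q)"
    and var: "\<And>l p. l \<in> V \<Longrightarrow> vars_in V p \<Longrightarrow> P p \<Longrightarrow> P (var l * p)"
  shows "P p"
proof -
  have "P (\<Sum>m\<in>S. Poly_Mapping.single m (Poly_Mapping.lookup p m))" if "S \<subseteq> Poly_Mapping.keys p" for S
  proof -
    have "finite S" by (rule finite_subset[OF that finite_keys])
    then show ?thesis using that
    proof (induction S rule: finite_induct)
      case empty then show ?case using cst[of 0] by simp
    next
      case (insert x F)
      have "P (Poly_Mapping.single x (Poly_Mapping.lookup p x))"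
        using assms(1) insert.prems by (intro mono_induct[OF _ cst var]) (auto simp: vars_in_def)
      then show ?case using insert add by simp
    qed
  qed
  then show ?thesis by (subst poly_expand) simp
qed

lemma lookup_var_mult:
  "Poly_Mapping.lookup (var l * p) m =
     (if 0 < Poly_Mapping.lookup m l then Poly_Mapping.lookup p (m - Poly_Mapping.single l 1) else 0)"
proof -
  have "(\<forall>i. Poly_Mapping.lookup (Poly_Mapping.single l (1::nat)) i \<le> Poly_Mapping.lookup m i) \<longleftrightarrow> 0 < Poly_Mapping.lookup m l"
    by (auto simp: lookup_single when_def)
  then show ?thesis unfolding var_def lookup_mult_single by simp
qed


definition tau :: "nat \<Rightarrow> nat \<Rightarrow> nat \<Rightarrow> nat" where
  "tau i j k = (if k = i then j else if k = j then i else k)"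

lemma tau_tau[simp]: "tau i j (tau i j k) = k" by (simp add: tau_def)
lemma tau_eq_iff[simp]: "(tau a b l = tau a b j) = (l = j)"
  by (metis tau_tau)

lemma inj_tau: "inj (tau i j)" by (metis injI tau_tau)

definition smono :: "nat \<Rightarrow> nat \<Rightarrow> (nat \<Rightarrow>\<^sub>0 nat) \<Rightarrow> (nat \<Rightarrow>\<^sub>0 nat)" where
  "smono i j m = Abs_poly_mapping (\<lambda>k. Poly_Mapping.lookup m (tau i j k))"

lemma lookup_smono: "Poly_Mapping.lookup (smono i j m) k = Poly_Mapping.lookup m (tau i j k)"
proof -
  have "finite (tau i j -` {k. Poly_Mapping.lookup m k \<noteq> 0})"
    by (rule finite_vimageI[OF finite_lookup inj_tau])
  then have "finite {k. Poly_Mapping.lookup m (tau i j k) \<noteq> 0}"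
    by (simp only: vimage_def mem_Collect_eq)
  then show ?thesis by (simp add: smono_def)
qed

lemma smono_smono[simp]: "smono i j (smono i j m) = m"
  by (rule poly_mapping_eqI) (simp add: lookup_smono)

lemma inj_smono: "inj (smono i j)" by (metis injI smono_smono)

lemma lookup_swapv: "Poly_Mapping.lookup (swapv i j p) m = Poly_Mapping.lookup p (smono i j m)"
proof -
  have "finite (smono i j -` {k. Poly_Mapping.lookup p k \<noteq> 0})"
    by (rule finite_vimageI[OF finite_lookup inj_smono])
  then have "finite {m. Poly_Mapping.lookup p (smono i j m) \<noteq> 0}"
    by (simp only: vimage_def mem_Collect_eq)
  moreover have "swapv i j p = Abs_poly_mapping (\<lambda>m. Poly_Mapping.lookup p (smono i j m))"
    by (simp add: swapv_def smono_def tau_def)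
  ultimately show ?thesis by simp
qed

lemma lookup_flipv: "Poly_Mapping.lookup (flipv j p) m = (-1) ^ Poly_Mapping.lookup m j * Poly_Mapping.lookup p m"
proof -
  have "finite {m. (-1) ^ Poly_Mapping.lookup m j * Poly_Mapping.lookup p m \<noteq> (0::complex)}"
    by (rule finite_subset[of _ "{m. Poly_Mapping.lookup p m \<noteq> 0}"]) auto
  then show ?thesis by (simp add: flipv_def)
qed

lemma lookup_pderivv: "Poly_Mapping.lookup (pderivv j p) m =
   of_nat (Poly_Mapping.lookup m j + 1) * Poly_Mapping.lookup p (m + Poly_Mapping.single j 1)"
proof -
  have inj: "inj (\<lambda>m::nat\<Rightarrow>\<^sub>0nat. m + Poly_Mapping.single j 1)" by (rule injI) simp
  have "finite ((\<lambda>m. m + Poly_Mapping.single j 1) -` {m. Poly_Mapping.lookup p m \<noteq> 0})"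
    by (rule finite_vimageI[OF finite_lookup inj])
  then have "finite {m. of_nat (Poly_Mapping.lookup m j + 1) * Poly_Mapping.lookup p (m + Poly_Mapping.single j 1) \<noteq> (0::complex)}"
    by (rule finite_subset[rotated]) (auto simp del: One_nat_def)
  then show ?thesis by (simp add: pderivv_def del: One_nat_def)
qed

definition hom :: "op \<Rightarrow> bool" where
  "hom w \<longleftrightarrow> (\<forall>p q. w (p + q) = w p + w q) \<and> (\<forall>c p. w (cst c * p) = cst c * w p)
     \<and> (\<forall>l p. w (var l * p) = w (var l) * w p) \<and> w 1 = 1"

lemma hom_add: "hom w \<Longrightarrow> w (p + q) = w p + w q" by (simp add: hom_def)
lemma hom_cst_mult: "hom w \<Longrightarrow> w (cst c * p) = cst c * w p" by (simp add: hom_def)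
lemma hom_var_mult: "hom w \<Longrightarrow> w (var l * p) = w (var l) * w p" by (simp add: hom_def)
lemma hom_1: "hom w \<Longrightarrow> w 1 = 1" by (simp add: hom_def)
lemma hom_cst: "hom w \<Longrightarrow> w (cst c) = cst c" using hom_cst_mult[of w c 1] by (simp add: hom_def)
lemma hom_0: "hom w \<Longrightarrow> w 0 = 0" using hom_cst[of w 0] by simp
lemma hom_uminus: "hom w \<Longrightarrow> w (- p) = - w p"
  using hom_cst_mult[of w "-1" p] by (simp add: cst_uminus)
lemma hom_diff: "hom w \<Longrightarrow> w (p - q) = w p - w q"
  using hom_add[of w p "- q"] hom_uminus[of w q] by simp

lemma hom_mult: assumes "hom w" shows "w (p * q) = w p * w q"
proof -
  have "vars_in UNIV p" by simp
  then show ?thesis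
  proof (induction p rule: mpoly_induct)
    case (cst c) then show ?case using assms by (simp add: hom_cst_mult hom_cst)
  next
    case (add p1 p2) then show ?case using assms by (simp add: distrib_right hom_add)
  next
    case (var l p) then show ?case using assms by (simp add: mult.assoc hom_var_mult)
  qed
qed

lemma hom_eq: assumes "hom w1" "hom w2" "\<And>l. w1 (var l) = w2 (var l)" shows "w1 p = w2 p"
proof -
  have "vars_in UNIV p" by simp
  then show ?thesis
  proof (induction p rule: mpoly_induct)
    case (cst c) then show ?case using assms by (simp add: hom_cst)
  next
    case (add p1 p2) then show ?case using assms by (simp add: hom_add)
  next
    case (var l p) then show ?case using assms by (simp add: hom_var_mult)
  qed
qed

lemma hom_comp: assumes "hom w1" "hom w2" shows "hom (\<lambda>p. w1 (w2 p))"
  unfolding hom_def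
proof (intro conjI allI)
  fix p q show "w1 (w2 (p + q)) = w1 (w2 p) + w1 (w2 q)" using assms by (simp add: hom_add)
next
  fix c p show "w1 (w2 (cst c * p)) = cst c * w1 (w2 p)" using assms by (simp add: hom_cst_mult)
next
  fix l p show "w1 (w2 (var l * p)) = w1 (w2 (var l)) * w1 (w2 p)"
    using assms by (simp add: hom_var_mult hom_mult[OF assms(1)])
next
  show "w1 (w2 1) = 1" using assms by (simp add: hom_1)
qed

lemma hom_id: "hom (\<lambda>p. p)" by (simp add: hom_def)

lemma smono_minus_single: "0 < Poly_Mapping.lookup m (tau i j l) \<Longrightarrow>
   smono i j (m - Poly_Mapping.single (tau i j l) 1) = smono i j m - Poly_Mapping.single l 1"
  by (rule poly_mapping_eqI) (auto simp: lookup_smono lookup_minus lookup_single when_def tau_def)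

lemma swapv_var: "swapv i j (var l) = var (tau i j l)"
proof (rule poly_mapping_eqI)
  fix m :: "nat \<Rightarrow>\<^sub>0 nat"
  have "(Poly_Mapping.single l 1 = smono i j m) \<longleftrightarrow> (Poly_Mapping.single (tau i j l) 1 = m)"
  proof
    assume "Poly_Mapping.single l 1 = smono i j m"
    then have "smono i j (Poly_Mapping.single l 1) = m" by simp
    moreover have "smono i j (Poly_Mapping.single l 1) = Poly_Mapping.single (tau i j l) 1"
      by (rule poly_mapping_eqI) (auto simp: lookup_smono lookup_single when_def)
    ultimately show "Poly_Mapping.single (tau i j l) 1 = m" by simp
  next
    assume "Poly_Mapping.single (tau i j l) 1 = m"
    moreover have "smono i j (Poly_Mapping.single (tau i j l) 1) = Poly_Mapping.single l 1"
      by (rule poly_mapping_eqI) (auto simp: lookup_smono lookup_single when_def)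
    ultimately show "Poly_Mapping.single l 1 = smono i j m" by auto
  qed
  then show "Poly_Mapping.lookup (swapv i j (var l)) m = Poly_Mapping.lookup (var (tau i j l)) m"
    by (simp add: lookup_swapv var_def lookup_single when_def)
qed

lemma hom_swapv: "hom (swapv i j)"
  unfolding hom_def
proof (intro conjI allI)
  fix p q show "swapv i j (p + q) = swapv i j p + swapv i j q"
    by (rule poly_mapping_eqI) (simp add: lookup_swapv lookup_add)
next
  fix c p show "swapv i j (cst c * p) = cst c * swapv i j p"
    by (rule poly_mapping_eqI) (simp add: lookup_swapv lookup_cst_mult)
next
  fix l p show "swapv i j (var l * p) = swapv i j (var l) * swapv i j p"
    unfolding swapv_var
    by (rule poly_mapping_eqI) (simp add: lookup_swapv lookup_var_mult lookup_smono smono_minus_single[simplified])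
next
  show "swapv i j 1 = 1"
  proof (rule poly_mapping_eqI)
    fix m :: "nat \<Rightarrow>\<^sub>0 nat"
    have "(0 = smono i j m) \<longleftrightarrow> (0 = m)"
      by (metis (no_types, lifting) lookup_smono lookup_zero poly_mapping_eqI smono_smono)
    then show "Poly_Mapping.lookup (swapv i j 1) m = Poly_Mapping.lookup 1 m"
      by (simp add: lookup_swapv lookup_one when_def)
  qed
qed

lemma single_one_eq[simp]: "Poly_Mapping.single l (1::nat) = Poly_Mapping.single j 1 \<longleftrightarrow> l = j"
  by (metis lookup_single_eq lookup_single_not_eq one_neq_zero)

lemma single_Suc0_eq[simp]: "Poly_Mapping.single l (Suc 0) = Poly_Mapping.single j (Suc 0) \<longleftrightarrow> l = j"
  using single_one_eq by simp

lemma flipv_var: "flipv j (var l) = (if l = j then - var l else var l)"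
  by (rule poly_mapping_eqI) (auto simp: lookup_flipv var_def lookup_single when_def)

lemma hom_flipv: "hom (flipv j)"
  unfolding hom_def
proof (intro conjI allI)
  fix p q show "flipv j (p + q) = flipv j p + flipv j q"
    by (rule poly_mapping_eqI) (simp add: lookup_flipv lookup_add algebra_simps)
next
  fix c p show "flipv j (cst c * p) = cst c * flipv j p"
    by (rule poly_mapping_eqI) (simp add: lookup_flipv lookup_cst_mult)
next
  fix l p show "flipv j (var l * p) = flipv j (var l) * flipv j p"
  proof (rule poly_mapping_eqI)
    fix m :: "nat \<Rightarrow>\<^sub>0 nat"
    show "Poly_Mapping.lookup (flipv j (var l * p)) m = Poly_Mapping.lookup (flipv j (var l) * flipv j p) m"
    proof (cases "l = j")
      case True
      have "0 < Poly_Mapping.lookup m j \<Longrightarrow> (-1::complex) ^ Poly_Mapping.lookup m j = - ((-1) ^ (Poly_Mapping.lookup m j - 1))"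
        by (cases "Poly_Mapping.lookup m j") simp_all
      then show ?thesis using True
        by (auto simp: flipv_var lookup_flipv lookup_var_mult lookup_minus lookup_single
             minus_mult_left[symmetric] lookup_cst_mult[of "-1", unfolded cst_uminus, simplified])
    next
      case False
      then show ?thesis
        by (auto simp: flipv_var lookup_flipv lookup_var_mult lookup_minus lookup_single)
    qed
  qed
next
  show "flipv j 1 = 1"
    by (rule poly_mapping_eqI) (simp add: lookup_flipv lookup_one when_def)
qed


lemma pderivv_add: "pderivv j (p + q) = pderivv j p + pderivv j q"
  by (rule poly_mapping_eqI) (simp add: lookup_pderivv lookup_add algebra_simps)

lemma pderivv_cst_mult: "pderivv j (cst c * p) = cst c * pderivv j p"
  by (rule poly_mapping_eqI) (simp add: lookup_pderivv lookup_cst_mult mult.left_commute)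

lemma pderivv_cst: "pderivv j (cst c) = 0"
proof (rule poly_mapping_eqI)
  fix m :: "nat \<Rightarrow>\<^sub>0 nat"
  have "m + Poly_Mapping.single j 1 \<noteq> 0"
  proof
    assume "m + Poly_Mapping.single j 1 = 0"
    then have "Poly_Mapping.lookup (m + Poly_Mapping.single j 1) j = 0" by simp
    then show False by (simp add: lookup_add)
  qed
  then show "Poly_Mapping.lookup (pderivv j (cst c)) m = Poly_Mapping.lookup 0 m"
    by (simp add: lookup_pderivv cst_def lookup_single when_def)
qed

lemma pderivv_1: "pderivv j 1 = 0" using pderivv_cst[of j 1] by simp

lemma pderivv_var_mult: "pderivv j (var l * p) = (if l = j then p else 0) + var l * pderivv j p"
proof (rule poly_mapping_eqI)
  fix m :: "nat \<Rightarrow>\<^sub>0 nat"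
  show "Poly_Mapping.lookup (pderivv j (var l * p)) m = Poly_Mapping.lookup ((if l = j then p else 0) + var l * pderivv j p) m"
  proof (cases "l = j")
    case True
    have e1: "m + Poly_Mapping.single j 1 - Poly_Mapping.single j 1 = m"
      by (rule poly_mapping_eqI) (simp add: lookup_add lookup_minus)
    have e2: "0 < Poly_Mapping.lookup m j \<Longrightarrow> m - Poly_Mapping.single j 1 + Poly_Mapping.single j 1 = m"
      by (rule poly_mapping_eqI) (auto simp: lookup_add lookup_minus lookup_single when_def)
    have e3: "0 < Poly_Mapping.lookup m j \<Longrightarrow> Poly_Mapping.lookup (m - Poly_Mapping.single j 1) j + 1 = Poly_Mapping.lookup m j"
      by (simp add: lookup_minus)
    have l: "Poly_Mapping.lookup (pderivv j (var l * p)) m = of_nat (Poly_Mapping.lookup m j + 1) * Poly_Mapping.lookup p m"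
      using True by (simp add: lookup_pderivv lookup_var_mult lookup_add e1 del: One_nat_def)
    have r: "Poly_Mapping.lookup (var l * pderivv j p) m = of_nat (Poly_Mapping.lookup m j) * Poly_Mapping.lookup p m"
      using True by (cases "0 < Poly_Mapping.lookup m j")
        (simp_all add: lookup_pderivv lookup_var_mult e2 e3 del: One_nat_def)
    show ?thesis unfolding lookup_add l r using True by (simp add: algebra_simps)
  next
    case False
    have e1: "0 < Poly_Mapping.lookup m l \<Longrightarrow> m + Poly_Mapping.single j 1 - Poly_Mapping.single l 1 = m - Poly_Mapping.single l 1 + Poly_Mapping.single j 1"
      using False by (intro poly_mapping_eqI) (auto simp: lookup_add lookup_minus lookup_single when_def)
    have e3: "Poly_Mapping.lookup (m - Poly_Mapping.single l 1) j = Poly_Mapping.lookup m j"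
      using False by (simp add: lookup_minus lookup_single)
    show ?thesis using False
      by (auto simp: lookup_pderivv lookup_var_mult lookup_add e1 e3 lookup_single simp del: One_nat_def)
  qed
qed

lemma pdivide_eq: "(L::mpoly) \<noteq> 0 \<Longrightarrow> L * q = X \<Longrightarrow> pdivide X L = q"
  unfolding pdivide_def by (rule the_equality) auto

definition ddiv :: "op \<Rightarrow> mpoly \<Rightarrow> bool" where
  "ddiv w L \<longleftrightarrow> hom w \<and> L \<noteq> 0 \<and> (\<forall>l. \<exists>q. L * q = var l - w (var l))"

lemma ddiv_exists: assumes "ddiv w L" shows "\<exists>q. L * q = p - w p"
proof -
  have hw: "hom w" and l: "\<And>l. \<exists>q. L * q = var l - w (var l)" using assms by (auto simp: ddiv_def)
  have "vars_in UNIV p" by simp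
  then show ?thesis
  proof (induction p rule: mpoly_induct)
    case (cst c) then show ?case using hw by (intro exI[of _ 0]) (simp add: hom_cst)
  next
    case (add p1 p2)
    then obtain q1 q2 where "L * q1 = p1 - w p1" "L * q2 = p2 - w p2" by blast
    then show ?case unfolding hom_add[OF hw] by (intro exI[of _ "q1 + q2"]) (simp add: algebra_simps)
  next
    case (var k p)
    then obtain q1 where q1: "L * q1 = p - w p" by blast
    obtain q2 where q2: "L * q2 = var k - w (var k)" using l by blast
    have "L * (var k * q1 + q2 * w p) = var k * (L * q1) + (L * q2) * w p"
      by (simp only: distrib_left mult.left_commute mult.assoc)
    also have "\<dots> = var k * p - w (var k * p)"
      unfolding q1 q2 hom_var_mult[OF hw] by (simp add: algebra_simps)
    finally show ?case by blast
  qed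
qed

lemma ddiv_mult: "ddiv w L \<Longrightarrow> L * pdivide (p - w p) L = p - w p"
  using ddiv_exists[of w L p] pdivide_eq by (auto simp: ddiv_def)

lemma ddiv_add: assumes "ddiv w L"
  shows "pdivide ((p + q) - w (p + q)) L = pdivide (p - w p) L + pdivide (q - w q) L"
proof (rule pdivide_eq)
  show "L \<noteq> 0" using assms by (simp add: ddiv_def)
  have "L * (pdivide (p - w p) L + pdivide (q - w q) L) = L * pdivide (p - w p) L + L * pdivide (q - w q) L"
    by (simp only: distrib_left)
  also have "\<dots> = (p - w p) + (q - w q)" by (simp only: ddiv_mult[OF assms])
  also have "\<dots> = (p + q) - w (p + q)"
    using assms unfolding ddiv_def by (simp add: hom_add)
  finally show "L * (pdivide (p - w p) L + pdivide (q - w q) L) = (p + q) - w (p + q)" .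
qed

lemma ddiv_cst_mult: assumes "ddiv w L"
  shows "pdivide ((cst c * p) - w (cst c * p)) L = cst c * pdivide (p - w p) L"
proof (rule pdivide_eq)
  show "L \<noteq> 0" using assms by (simp add: ddiv_def)
  have "L * (cst c * pdivide (p - w p) L) = cst c * (L * pdivide (p - w p) L)"
    by (simp only: mult.left_commute)
  also have "\<dots> = cst c * (p - w p)" by (simp only: ddiv_mult[OF assms])
  also have "\<dots> = cst c * p - w (cst c * p)"
    using assms by (simp add: ddiv_def hom_cst_mult right_diff_distrib)
  finally show "L * (cst c * pdivide (p - w p) L) = cst c * p - w (cst c * p)" .
qed

lemma ddiv_cst: assumes "ddiv w L" shows "pdivide (cst c - w (cst c)) L = 0"
  apply (rule pdivide_eq) using assms by (auto simp: ddiv_def hom_cst)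

lemma ddiv_var_mult: assumes "ddiv w L"
  shows "pdivide ((var l * p) - w (var l * p)) L
     = var l * pdivide (p - w p) L + pdivide (var l - w (var l)) L * w p"
proof (rule pdivide_eq)
  show "L \<noteq> 0" using assms by (simp add: ddiv_def)
  have "L * (var l * pdivide (p - w p) L + pdivide (var l - w (var l)) L * w p)
      = var l * (L * pdivide (p - w p) L) + (L * pdivide (var l - w (var l)) L) * w p"
    by (simp only: distrib_left mult.left_commute mult.assoc)
  also have "\<dots> = var l * (p - w p) + (var l - w (var l)) * w p"
    by (simp only: ddiv_mult[OF assms])
  also have "\<dots> = var l * p - w (var l * p)"
    using assms unfolding ddiv_def by (simp only: hom_var_mult) (simp add: algebra_simps)
  finally show "L * (var l * pdivide (p - w p) L + pdivide (var l - w (var l)) L * w p) = var l * p - w (var l * p)" .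
qed

lemma var_neq0: "var l \<noteq> 0"
  by (metis lookup_single_eq lookup_zero one_neq_zero var_def)

lemma lookup_var: "Poly_Mapping.lookup (var l) m = (if m = Poly_Mapping.single l 1 then 1 else 0)"
  by (auto simp: var_def lookup_single when_def)

lemma var_diff_neq0: "j \<noteq> k \<Longrightarrow> var j - var k \<noteq> 0"
  by (metis (no_types, lifting) eq_iff_diff_eq_0 lookup_var single_one_eq zero_neq_one)

lemma var_add_neq0: "j \<noteq> k \<Longrightarrow> var j + var k \<noteq> 0"
proof
  assume "j \<noteq> k" "var j + var k = 0"
  then have "Poly_Mapping.lookup (var j + var k) (Poly_Mapping.single j 1) = 0" by simp
  then show False using \<open>j \<noteq> k\<close> by (simp add: lookup_add lookup_var)
qed

definition rv :: "nat \<Rightarrow> nat \<Rightarrow> op" where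
  "rv j k p = flipv j (flipv k (swapv j k p))"

lemma hom_rv: "hom (rv j k)"
proof -
  have "rv j k = (\<lambda>p. flipv j ((\<lambda>p. flipv k (swapv j k p)) p))" by (simp add: rv_def fun_eq_iff)
  then show ?thesis by (simp only:) (rule hom_comp[OF hom_flipv hom_comp[OF hom_flipv hom_swapv]])
qed

lemma rv_var: "rv j k (var l) = (if j = k then var l else if l = j then - var k else if l = k then - var j else var l)"
  by (auto simp: rv_def swapv_var tau_def flipv_var hom_uminus[OF hom_flipv])

lemma ddiv_swapv: assumes "j \<noteq> k" shows "ddiv (swapv j k) (var j - var k)"
  unfolding ddiv_def
proof (intro conjI allI hom_swapv var_diff_neq0[OF assms])
  fix l show "\<exists>q. (var j - var k) * q = var l - swapv j k (var l)"
    by (rule exI[of _ "cst (if l = j then 1 else if l = k then -1 else 0)"])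
       (auto simp: swapv_var tau_def cst_uminus)
qed

lemma pdiv_swapv_var: assumes "j \<noteq> k"
  shows "pdivide (var l - swapv j k (var l)) (var j - var k) = cst (if l = j then 1 else if l = k then -1 else 0)"
  by (rule pdivide_eq[OF var_diff_neq0[OF assms]]) (auto simp: swapv_var tau_def cst_uminus)

lemma ddiv_rv: assumes "j \<noteq> k" shows "ddiv (rv j k) (var j + var k)"
  unfolding ddiv_def
proof (intro conjI allI hom_rv var_add_neq0[OF assms])
  fix l show "\<exists>q. (var j + var k) * q = var l - rv j k (var l)"
    by (rule exI[of _ "cst (if l = j then 1 else if l = k then 1 else 0)"])
       (use assms in \<open>auto simp: rv_var\<close>)
qed

lemma pdiv_rv_var: assumes "j \<noteq> k"
  shows "pdivide (var l - rv j k (var l)) (var j + var k) = cst (if l = j then 1 else if l = k then 1 else 0)"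
  by (rule pdivide_eq[OF var_add_neq0[OF assms]]) (use assms in \<open>auto simp: rv_var\<close>)

lemma ddiv_flipv: "ddiv (flipv j) (var j)"
  unfolding ddiv_def
proof (intro conjI allI hom_flipv var_neq0)
  fix l show "\<exists>q. var j * q = var l - flipv j (var l)"
    by (rule exI[of _ "cst (if l = j then 2 else 0)"])
       (auto simp: flipv_var cst_numeral)
qed

lemma pdiv_flipv_var:
  shows "pdivide (var l - flipv j (var l)) (var j) = cst (if l = j then 2 else 0)"
  by (rule pdivide_eq[OF var_neq0]) (auto simp: flipv_var cst_numeral)


definition Kset :: "nat \<Rightarrow> nat \<Rightarrow> nat set" where "Kset N j = {k. k < N \<and> k \<noteq> j}"
lemma finite_Kset[simp]: "finite (Kset N j)" by (simp add: Kset_def)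

definition sdd :: "nat \<Rightarrow> nat \<Rightarrow> op" where "sdd j k p = pdivide (p - swapv j k p) (var j - var k)"
definition rdd :: "nat \<Rightarrow> nat \<Rightarrow> op" where "rdd j k p = pdivide (p - rv j k p) (var j + var k)"
definition tdd :: "nat \<Rightarrow> op" where "tdd j p = pdivide (p - flipv j p) (var j)"

lemma DB_eq: "DB \<beta> \<gamma> N j p = pderivv j p + cst (of_nat \<beta>) * (\<Sum>k\<in>Kset N j. sdd j k p + rdd j k p) + cst \<gamma> * tdd j p"
  by (simp add: DB_def Kset_def sdd_def rdd_def tdd_def rv_def)

lemma DA_eq: "DA \<beta> N j p = pderivv j p + cst (of_nat \<beta>) * (\<Sum>k\<in>Kset N j. sdd j k p)"
  by (simp add: DA_def Kset_def sdd_def)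

lemma sdd_add: "j \<noteq> k \<Longrightarrow> sdd j k (p + q) = sdd j k p + sdd j k q"
  unfolding sdd_def by (rule ddiv_add[OF ddiv_swapv])
lemma sdd_cst_mult: "j \<noteq> k \<Longrightarrow> sdd j k (cst c * p) = cst c * sdd j k p"
  unfolding sdd_def by (rule ddiv_cst_mult[OF ddiv_swapv])
lemma sdd_cst: "j \<noteq> k \<Longrightarrow> sdd j k (cst c) = 0"
  unfolding sdd_def by (rule ddiv_cst[OF ddiv_swapv])
lemma sdd_var_mult: "j \<noteq> k \<Longrightarrow> sdd j k (var l * p) = var l * sdd j k p + cst (if l = j then 1 else if l = k then -1 else 0) * swapv j k p"
  unfolding sdd_def by (simp add: ddiv_var_mult[OF ddiv_swapv] pdiv_swapv_var)

lemma rdd_add: "j \<noteq> k \<Longrightarrow> rdd j k (p + q) = rdd j k p + rdd j k q"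
  unfolding rdd_def by (rule ddiv_add[OF ddiv_rv])
lemma rdd_cst_mult: "j \<noteq> k \<Longrightarrow> rdd j k (cst c * p) = cst c * rdd j k p"
  unfolding rdd_def by (rule ddiv_cst_mult[OF ddiv_rv])
lemma rdd_cst: "j \<noteq> k \<Longrightarrow> rdd j k (cst c) = 0"
  unfolding rdd_def by (rule ddiv_cst[OF ddiv_rv])
lemma rdd_var_mult: "j \<noteq> k \<Longrightarrow> rdd j k (var l * p) = var l * rdd j k p + cst (if l = j then 1 else if l = k then 1 else 0) * rv j k p"
  unfolding rdd_def by (simp add: ddiv_var_mult[OF ddiv_rv] pdiv_rv_var)

lemma tdd_add: "tdd j (p + q) = tdd j p + tdd j q"
  unfolding tdd_def by (rule ddiv_add[OF ddiv_flipv])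
lemma tdd_cst_mult: "tdd j (cst c * p) = cst c * tdd j p"
  unfolding tdd_def by (rule ddiv_cst_mult[OF ddiv_flipv])
lemma tdd_cst: "tdd j (cst c) = 0"
  unfolding tdd_def by (rule ddiv_cst[OF ddiv_flipv])
lemma tdd_var_mult: "tdd j (var l * p) = var l * tdd j p + cst (if l = j then 2 else 0) * flipv j p"
  unfolding tdd_def by (simp add: ddiv_var_mult[OF ddiv_flipv] pdiv_flipv_var)

locale dk = fixes \<beta> :: nat and \<gamma> :: complex and N :: nat
begin

abbreviation "cb \<equiv> cst (of_nat \<beta>)"
abbreviation D where "D j \<equiv> DB \<beta> \<gamma> N j"

definition cB :: "nat \<Rightarrow> nat \<Rightarrow> op" where
  "cB j l p = (if l = j then p + cb * (\<Sum>k\<in>Kset N j. swapv j k p + rv j k p) + cst (2 * \<gamma>) * flipv j p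
              else if l < N then cb * (rv j l p - swapv j l p) else 0)"

lemma D_add: "D j (p + q) = D j p + D j q"
  by (simp add: DB_eq pderivv_add sdd_add rdd_add tdd_add Kset_def sum.distrib algebra_simps)

lemma D_cst_mult: "D j (cst c * p) = cst c * D j p"
proof -
  have "(\<Sum>k\<in>Kset N j. sdd j k (cst c * p) + rdd j k (cst c * p)) = (\<Sum>k\<in>Kset N j. cst c * (sdd j k p + rdd j k p))"
    by (rule sum.cong) (auto simp: Kset_def sdd_cst_mult rdd_cst_mult distrib_left)
  also have "\<dots> = cst c * (\<Sum>k\<in>Kset N j. sdd j k p + rdd j k p)" by (simp only: sum_distrib_left)
  finally have s: "(\<Sum>k\<in>Kset N j. sdd j k (cst c * p) + rdd j k (cst c * p)) = cst c * (\<Sum>k\<in>Kset N j. sdd j k p + rdd j k p)" .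
  show ?thesis unfolding DB_eq pderivv_cst_mult tdd_cst_mult s by (simp add: algebra_simps)
qed

lemma D_cst: "D j (cst c) = 0"
  by (simp add: DB_eq pderivv_cst sdd_cst rdd_cst tdd_cst Kset_def)

lemma D_1: "D j 1 = 0" using D_cst[of j 1] by simp

lemma D_var_mult: "D j (var l * p) = var l * D j p + cB j l p"
proof -
  have sk: "(\<Sum>k\<in>Kset N j. sdd j k (var l * p) + rdd j k (var l * p))
     = var l * (\<Sum>k\<in>Kset N j. sdd j k p + rdd j k p)
       + (\<Sum>k\<in>Kset N j. cst (if l = j then 1 else if l = k then -1 else 0) * swapv j k p
                         + cst (if l = j then 1 else if l = k then 1 else 0) * rv j k p)"
  proof -
    have "(\<Sum>k\<in>Kset N j. sdd j k (var l * p) + rdd j k (var l * p))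
       = (\<Sum>k\<in>Kset N j. var l * (sdd j k p + rdd j k p) + (cst (if l = j then 1 else if l = k then -1 else 0) * swapv j k p
                         + cst (if l = j then 1 else if l = k then 1 else 0) * rv j k p))"
      by (rule sum.cong) (auto simp: Kset_def sdd_var_mult rdd_var_mult distrib_left)
    then show ?thesis by (simp only: sum.distrib sum_distrib_left distrib_left)
  qed
  have s2: "(\<Sum>k\<in>Kset N j. cst (if l = j then 1 else if l = k then -1 else 0) * swapv j k p
                         + cst (if l = j then 1 else if l = k then 1 else 0) * rv j k p)
     = (if l = j then (\<Sum>k\<in>Kset N j. swapv j k p + rv j k p)
        else if l < N then rv j l p - swapv j l p else 0)"
  proof (cases "l = j")
    case True then show ?thesis by simp
  next
    case False
    have "(\<Sum>k\<in>Kset N j. cst (if l = j then 1 else if l = k then -1 else 0) * swapv j k p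
                         + cst (if l = j then 1 else if l = k then 1 else 0) * rv j k p)
        = (\<Sum>k\<in>Kset N j. if k = l then rv j l p - swapv j l p else 0)"
      using False by (intro sum.cong) (auto simp: cst_uminus)
    also have "\<dots> = (if l < N then rv j l p - swapv j l p else 0)"
      using False by (simp add: sum.delta' Kset_def)
    finally show ?thesis using False by simp
  qed
  show ?thesis
    unfolding DB_eq pderivv_var_mult sk s2 tdd_var_mult cB_def
    by (simp add: algebra_simps cst_mult cst_mult_numeral)
qed

end


lemma tau_conj: "tau a b (tau j k l) = tau (tau a b j) (tau a b k) (tau a b l)"
  by (simp add: tau_def)

lemma hom_eq2: assumes "hom wa" "hom wb" "hom wc" "hom wd" "\<And>l. wa (wb (var l)) = wc (wd (var l))"
  shows "wa (wb p) = wc (wd p)"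
  using hom_eq[OF hom_comp[OF assms(1,2)] hom_comp[OF assms(3,4)]] assms(5) by blast

lemma swap_swap: "swapv a b (swapv j k p) = swapv (tau a b j) (tau a b k) (swapv a b p)"
  by (rule hom_eq2[where wa="swapv a b" and wb="swapv j k" and wc="swapv (tau a b j) (tau a b k)" and wd="swapv a b"])
     (simp_all add: hom_swapv swapv_var tau_conj[symmetric])

lemma swap_flip: "swapv a b (flipv j p) = flipv (tau a b j) (swapv a b p)"
  by (rule hom_eq2[where wa="swapv a b" and wb="flipv j" and wc="flipv (tau a b j)" and wd="swapv a b"])
     (auto simp: hom_swapv hom_flipv swapv_var flipv_var hom_uminus[OF hom_swapv] tau_def)

lemma swap_rv: "swapv a b (rv j k p) = rv (tau a b j) (tau a b k) (swapv a b p)"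
  unfolding rv_def by (subst swap_flip, subst swap_flip, subst swap_swap, rule refl)

lemma flip_flip: "flipv a (flipv j p) = flipv j (flipv a p)"
  by (rule hom_eq2[where wa="flipv a" and wb="flipv j" and wc="flipv j" and wd="flipv a"])
     (auto simp: hom_flipv flipv_var hom_uminus[OF hom_flipv])

lemma flip_flip_same[simp]: "flipv a (flipv a p) = p"
  using hom_eq2[where wa="flipv a" and wb="flipv a" and wc="\<lambda>p. p" and wd="\<lambda>p. p"]
  by (auto simp: hom_flipv hom_id flipv_var hom_uminus[OF hom_flipv])

lemma swap_swap_same[simp]: "swapv a b (swapv a b p) = p"
  using hom_eq2[where wa="swapv a b" and wb="swapv a b" and wc="\<lambda>p. p" and wd="\<lambda>p. p"]
  by (auto simp: hom_swapv hom_id swapv_var)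

lemma swapv_sym: "swapv a b p = swapv b a p"
  by (rule hom_eq[of "swapv a b" "swapv b a"]) (auto simp: hom_swapv swapv_var tau_def)

lemma flip_swap_other: "a \<noteq> j \<Longrightarrow> a \<noteq> k \<Longrightarrow> flipv a (swapv j k p) = swapv j k (flipv a p)"
  using swap_flip[of j k a p] by (simp add: tau_def)

lemma flip_swap_in: "a = j \<or> a = k \<Longrightarrow> flipv a (swapv j k p) = rv j k (flipv a p)"
  by (rule hom_eq2[where wa="flipv a" and wb="swapv j k" and wc="rv j k" and wd="flipv a"])
     (auto simp: hom_flipv hom_swapv hom_rv flipv_var swapv_var rv_var tau_def
        hom_uminus[OF hom_rv] hom_uminus[OF hom_swapv] hom_uminus[OF hom_flipv])

lemma flip_rv_in: "a = j \<or> a = k \<Longrightarrow> flipv a (rv j k p) = swapv j k (flipv a p)"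
  by (rule hom_eq2[where wa="flipv a" and wb="rv j k" and wc="swapv j k" and wd="flipv a"])
     (auto simp: hom_flipv hom_swapv hom_rv flipv_var swapv_var rv_var tau_def
        hom_uminus[OF hom_rv] hom_uminus[OF hom_swapv] hom_uminus[OF hom_flipv])

lemma flip_rv_other: "a \<noteq> j \<Longrightarrow> a \<noteq> k \<Longrightarrow> flipv a (rv j k p) = rv j k (flipv a p)"
  unfolding rv_def flip_flip[of a j] flip_flip[of a k] by (simp add: flip_swap_other)

lemma rv_sym: "rv j k p = rv k j p"
  unfolding rv_def swapv_sym[of j k] flip_flip[of j k] ..


lemma bij_tau_Kset: assumes "a < N" "b < N"
  shows "bij_betw (tau a b) (Kset N j) (Kset N (tau a b j))"
proof (rule bij_betw_byWitness[where f' = "tau a b"])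
  show "\<forall>x\<in>Kset N j. tau a b (tau a b x) = x" by simp
  show "\<forall>x\<in>Kset N (tau a b j). tau a b (tau a b x) = x" by simp
  show "tau a b ` Kset N j \<subseteq> Kset N (tau a b j)"
    using assms by (auto simp: Kset_def tau_def)
  show "tau a b ` Kset N (tau a b j) \<subseteq> Kset N j"
    using assms by (auto simp: Kset_def tau_def split: if_splits)
qed

lemma tau_lt: "a < N \<Longrightarrow> b < N \<Longrightarrow> (tau a b l < N) = (l < N)"
  by (auto simp: tau_def)

lemma hom_sum: "hom w \<Longrightarrow> w (sum f S) = (\<Sum>k\<in>S. w (f k))"
  by (induction S rule: infinite_finite_induct) (simp_all add: hom_0 hom_add)

context dk begin

lemma D_0: "D j 0 = 0" using D_cst[of j 0] by simp

lemma swap_cB: assumes "a < N" "b < N"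
  shows "swapv a b (cB j l p) = cB (tau a b j) (tau a b l) (swapv a b p)"
proof (cases "l = j")
  case True
  have "swapv a b (\<Sum>k\<in>Kset N j. swapv j k p + rv j k p)
      = (\<Sum>k\<in>Kset N j. swapv (tau a b j) (tau a b k) (swapv a b p) + rv (tau a b j) (tau a b k) (swapv a b p))"
    unfolding hom_sum[OF hom_swapv] hom_add[OF hom_swapv] swap_swap[of a b j] swap_rv[of a b j] ..
  also have "\<dots> = (\<Sum>k\<in>Kset N (tau a b j). swapv (tau a b j) k (swapv a b p) + rv (tau a b j) k (swapv a b p))"
    by (rule sum.reindex_bij_betw[OF bij_tau_Kset[OF assms]])
  finally have s: "swapv a b (\<Sum>k\<in>Kset N j. swapv j k p + rv j k p) = \<dots>" .
  show ?thesis
    unfolding True cB_def if_P[OF refl] by (simp only: hom_add[OF hom_swapv] hom_cst_mult[OF hom_swapv] swap_flip s)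
next
  case False
  then have ne: "tau a b l \<noteq> tau a b j" by simp
  show ?thesis
  proof (cases "l < N")
    case True
    then have t: "tau a b l < N" using tau_lt[OF assms] by simp
    show ?thesis
      unfolding cB_def if_not_P[OF False] if_not_P[OF ne] if_P[OF True] if_P[OF t]
      by (simp only: hom_cst_mult[OF hom_swapv] hom_diff[OF hom_swapv] swap_swap[of a b j] swap_rv[of a b j])
  next
    case F2: False
    then have t: "\<not> tau a b l < N" using tau_lt[OF assms] by simp
    show ?thesis
      unfolding cB_def if_not_P[OF False] if_not_P[OF ne] if_not_P[OF F2] if_not_P[OF t]
      by (rule hom_0[OF hom_swapv])
  qed
qed

lemma swap_D: assumes "a < N" "b < N"
  shows "swapv a b (D j p) = D (tau a b j) (swapv a b p)"
proof -
  have "vars_in UNIV p" by simp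
  then show ?thesis
  proof (induction p rule: mpoly_induct)
    case (cst c) then show ?case by (simp add: D_cst hom_cst[OF hom_swapv] hom_0[OF hom_swapv])
  next
    case (add p q) then show ?case by (simp add: D_add hom_add[OF hom_swapv])
  next
    case (var l p) then show ?case
      by (simp only: D_var_mult hom_add[OF hom_swapv] hom_var_mult[OF hom_swapv] swapv_var swap_cB[OF assms])
  qed
qed

lemma flip_sr: "j \<noteq> k \<Longrightarrow> flipv a (swapv j k p) + flipv a (rv j k p) = swapv j k (flipv a p) + rv j k (flipv a p)"
  by (cases "a = j \<or> a = k") (auto simp: flip_swap_in flip_rv_in flip_swap_other flip_rv_other)

lemma flip_cB:
  "flipv a (cB j l p) = cst (if (a = j) = (l = a) then 1 else -1) * cB j l (flipv a p)"
proof (cases "l = j")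
  case True
  have "flipv a (\<Sum>k\<in>Kset N j. swapv j k p + rv j k p) = (\<Sum>k\<in>Kset N j. swapv j k (flipv a p) + rv j k (flipv a p))"
    unfolding hom_sum[OF hom_flipv] hom_add[OF hom_flipv]
    by (rule sum.cong) (auto simp: Kset_def flip_sr)
  then have "flipv a (cB j j p) = cB j j (flipv a p)"
    unfolding cB_def if_P[OF refl] by (simp only: hom_add[OF hom_flipv] hom_cst_mult[OF hom_flipv] flip_flip[of a j])
  moreover have "(a = j) = (l = a)" using True by auto
  ultimately show ?thesis using True by simp
next
  case False
  then show ?thesis
    by (auto simp: cB_def hom_cst_mult[OF hom_flipv] hom_diff[OF hom_flipv] hom_0[OF hom_flipv]
        flip_swap_in flip_rv_in flip_swap_other flip_rv_other cst_uminus)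
qed

lemma flipv_var': "flipv a (var l) = cst (if l = a then -1 else 1) * var l"
  by (simp add: flipv_var cst_uminus)

lemma flip_D: "flipv a (D j p) = cst (if a = j then -1 else 1) * D j (flipv a p)"
proof -
  have "vars_in UNIV p" by simp
  then show ?thesis
  proof (induction p rule: mpoly_induct)
    case (cst c) then show ?case by (simp add: D_cst hom_cst[OF hom_flipv] hom_0[OF hom_flipv])
  next
    case (add p q) then show ?case by (simp add: D_add hom_add[OF hom_flipv] distrib_left)
  next
    case (var l p)
    define e where "e = cst (if a = j then -1 else 1)"
    define el where "el = cst (if l = a then -1 else 1)"
    have eel: "e * el = cst (if (a = j) = (l = a) then 1 else -1)"
      unfolding e_def el_def by (auto simp: cst_mult)
    have "flipv a (D j (var l * p)) = el * var l * (e * D j (flipv a p)) + cst (if (a = j) = (l = a) then 1 else -1) * cB j l (flipv a p)"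
      unfolding D_var_mult hom_add[OF hom_flipv] hom_var_mult[OF hom_flipv] flipv_var' flip_cB var.IH
        e_def el_def ..
    also have "\<dots> = el * var l * (e * D j (flipv a p)) + (e * el) * cB j l (flipv a p)"
      unfolding eel ..
    also have "\<dots> = e * (el * (var l * D j (flipv a p) + cB j l (flipv a p)))"
      by (simp only: distrib_left mult.assoc mult.left_commute)
    also have "\<dots> = e * D j (flipv a (var l * p))"
      unfolding hom_var_mult[OF hom_flipv] flipv_var' mult.assoc el_def D_cst_mult D_var_mult ..
    finally show ?case unfolding e_def .
  qed
qed

end


context dk begin

lemma D_diff: "D j (p - q) = D j p - D j q"
  using D_add[of j "p - q" q] by simp

lemma D_sum: "D j (sum f S) = (\<Sum>k\<in>S. D j (f k))"
  by (induction S rule: infinite_finite_induct) (simp_all add: D_0 D_add)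

lemma rv_D: assumes "j \<noteq> k" "j < N" "k < N"
  shows "rv j k (D l p) = cst (if l = j \<or> l = k then -1 else 1) * D (tau j k l) (rv j k p)"
proof -
  have "rv j k (D l p) = flipv j (flipv k (D (tau j k l) (swapv j k p)))"
    unfolding rv_def swap_D[OF assms(2,3)] ..
  also have "\<dots> = cst (if k = tau j k l then -1 else 1) * (cst (if j = tau j k l then -1 else 1) * D (tau j k l) (rv j k p))"
    unfolding flip_D hom_cst_mult[OF hom_flipv] rv_def ..
  also have "\<dots> = cst (if l = j \<or> l = k then -1 else 1) * D (tau j k l) (rv j k p)"
    using assms(1) by (auto simp: tau_def cst_mult mult.assoc[symmetric])
  finally show ?thesis .
qed

lemma swap_D_other: "j < N \<Longrightarrow> m < N \<Longrightarrow> k \<noteq> j \<Longrightarrow> k \<noteq> m \<Longrightarrow> swapv j m (D k p) = D k (swapv j m p)"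
  using swap_D[of j m k p] by (simp add: tau_def)

lemma rv_D_other: "j < N \<Longrightarrow> m < N \<Longrightarrow> j \<noteq> m \<Longrightarrow> k \<noteq> j \<Longrightarrow> k \<noteq> m \<Longrightarrow> rv j m (D k p) = D k (rv j m p)"
  using rv_D[of j m k p] by (simp add: tau_def)

definition Sj :: "nat \<Rightarrow> op" where "Sj j q = (\<Sum>m\<in>Kset N j. swapv j m q + rv j m q)"

lemma S_comm: assumes "j < N" "k < N" "j \<noteq> k"
  shows "Sj j (D k p) = D k (Sj j p) + D j (swapv j k p) - D j (rv j k p) - D k (swapv j k p) - D k (rv j k p)"
proof -
  have kK: "k \<in> Kset N j" using assms by (simp add: Kset_def)
  have "Sj j (D k p) = (swapv j k (D k p) + rv j k (D k p)) + (\<Sum>m\<in>Kset N j - {k}. swapv j m (D k p) + rv j m (D k p))"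
    unfolding Sj_def by (rule sum.remove[OF finite_Kset kK])
  also have "(\<Sum>m\<in>Kset N j - {k}. swapv j m (D k p) + rv j m (D k p)) = (\<Sum>m\<in>Kset N j - {k}. D k (swapv j m p) + D k (rv j m p))"
    using assms by (intro sum.cong) (auto simp: Kset_def swap_D_other rv_D_other)
  also have "swapv j k (D k p) = D j (swapv j k p)"
    using swap_D[OF assms(1,2), of k p] by (simp add: tau_def)
  also have "rv j k (D k p) = - D j (rv j k p)"
    using rv_D[OF assms(3,1,2), of k p] by (simp add: tau_def cst_uminus)
  also have "D k (Sj j p) = (D k (swapv j k p) + D k (rv j k p)) + (\<Sum>m\<in>Kset N j - {k}. D k (swapv j m p) + D k (rv j m p))"
    unfolding Sj_def D_sum D_add by (rule sum.remove[OF finite_Kset kK])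
  ultimately show ?thesis by (simp add: algebra_simps)
qed

lemma cB_jj: "cB j j q = q + cb * Sj j q + cst (2 * \<gamma>) * flipv j q"
  by (simp add: cB_def Sj_def)

lemma cB_other: "l \<noteq> j \<Longrightarrow> l < N \<Longrightarrow> cB j l q = cb * (rv j l q - swapv j l q)"
  by (simp add: cB_def)

lemma cB_out: "l \<noteq> j \<Longrightarrow> \<not> l < N \<Longrightarrow> cB j l q = 0"
  by (simp add: cB_def)

lemma E_jj: assumes "j < N" "k < N" "j \<noteq> k"
  shows "cB j j (D k p) + D j (cB k j p) = cB k j (D j p) + D k (cB j j p)"
proof -
  have kj: "j \<noteq> k" using assms by simp
  have a1: "flipv j (D k p) = D k (flipv j p)" using flip_D[of j k p] assms by simp
  have a2: "rv k j (D j p) = - D k (rv j k p)"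
    using rv_D[OF assms(3,1,2), of j p] by (simp add: tau_def cst_uminus rv_sym[of k j])
  have a3: "swapv k j (D j p) = D k (swapv j k p)"
    using swap_D[OF assms(1,2), of j p] by (simp add: tau_def swapv_sym[of k j])
  have a4: "rv k j p = rv j k p" "swapv k j p = swapv j k p" by (simp_all add: rv_sym swapv_sym)
  show ?thesis
    unfolding cB_jj cB_other[OF kj assms(1)] S_comm[OF assms] a1 a2 a3 a4
      D_add D_cst_mult D_diff
    by (simp add: algebra_simps)
qed

lemma E_all: assumes "j < N" "k < N"
  shows "cB j l (D k p) + D j (cB k l p) = cB k l (D j p) + D k (cB j l p)"
proof -
  consider "j = k" | "j \<noteq> k" "l = j" | "j \<noteq> k" "l = k" | "j \<noteq> k" "l \<noteq> j" "l \<noteq> k" "l < N"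
    | "l \<noteq> j" "l \<noteq> k" "\<not> l < N" by blast
  then show ?thesis
  proof cases
    case 1 then show ?thesis by simp
  next
    case 2 then show ?thesis using E_jj[OF assms] by simp
  next
    case 3 then show ?thesis using E_jj[OF assms(2,1), of p] by (simp add: add.commute)
  next
    case 4
    have "cB j l (D k p) = D k (cB j l p)"
      using 4 assms unfolding cB_other[OF 4(2) 4(4)] cB_other[OF 4(3) 4(4)]
      by (simp add: rv_D_other swap_D_other D_cst_mult D_diff)
    moreover have "cB k l (D j p) = D j (cB k l p)"
      using 4 assms unfolding cB_other[OF 4(2) 4(4)] cB_other[OF 4(3) 4(4)]
      by (simp add: rv_D_other swap_D_other D_cst_mult D_diff)
    ultimately show ?thesis by (simp add: add.commute)
  next
    case 5 then show ?thesis by (simp add: cB_out D_0)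
  qed
qed

lemma D_comm: assumes "j < N" "k < N" shows "D j (D k p) = D k (D j p)"
proof -
  have "vars_in UNIV p" by simp
  then show ?thesis
  proof (induction p rule: mpoly_induct)
    case (cst c) then show ?case by (simp add: D_cst D_0)
  next
    case (add p q) then show ?case by (simp add: D_add)
  next
    case (var l p)
    have "D j (D k (var l * p)) = var l * D j (D k p) + (cB j l (D k p) + D j (cB k l p))"
      unfolding D_var_mult D_add by (simp add: add.assoc)
    also have "\<dots> = var l * D k (D j p) + (cB k l (D j p) + D k (cB j l p))"
      unfolding var.IH E_all[OF assms] ..
    also have "\<dots> = D k (D j (var l * p))"
      unfolding D_var_mult D_add by (simp add: add.assoc)
    finally show ?case .
  qed
qed

end


definition even_p :: "nat \<Rightarrow> mpoly \<Rightarrow> bool" where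
  "even_p N q \<longleftrightarrow> (\<forall>a<N. flipv a q = q)"

lemma even_swap: "a < N \<Longrightarrow> b < N \<Longrightarrow> even_p N q \<Longrightarrow> even_p N (swapv a b q)"
  unfolding even_p_def
proof (intro allI impI)
  fix c assume "a < N" "b < N" "\<forall>a<N. flipv a q = q" "c < N"
  then have "flipv (tau a b c) q = q" by (auto simp: tau_def)
  then have "swapv a b (flipv (tau a b c) q) = swapv a b q" by simp
  then show "flipv c (swapv a b q) = swapv a b q"
    using swap_flip[of a b "tau a b c" q] by simp
qed

lemma even_rv: "j < N \<Longrightarrow> k < N \<Longrightarrow> even_p N q \<Longrightarrow> rv j k q = swapv j k q"
  using even_swap[of j N k q] by (simp add: rv_def even_p_def)

lemma even_add: "even_p N p \<Longrightarrow> even_p N q \<Longrightarrow> even_p N (p + q)"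
  by (simp add: even_p_def hom_add[OF hom_flipv])
lemma even_cst_mult: "even_p N p \<Longrightarrow> even_p N (cst c * p)"
  by (simp add: even_p_def hom_cst_mult[OF hom_flipv])
lemma even_1: "even_p N 1"
  by (simp add: even_p_def hom_1[OF hom_flipv])
lemma even_sum: "(\<And>k. k \<in> S \<Longrightarrow> even_p N (f k)) \<Longrightarrow> even_p N (sum f S)"
  by (induction S rule: infinite_finite_induct) (auto simp: even_add even_p_def hom_0[OF hom_flipv] hom_add[OF hom_flipv])

context dk begin

definition A :: "nat \<Rightarrow> op" where "A j p = cst 2 * (var j * p) - D j p"
definition B :: "nat \<Rightarrow> op" where "B j p = cst (1/4) * A j (A j p)"
definition H :: "nat \<Rightarrow> op" where
  "H j p = cst (1/4) * A j (D j p) + cst (1/2) * cb * (\<Sum>k<j. swapv j k p + rv j k p)"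

lemma A_add: "A j (p + q) = A j p + A j q"
  by (simp add: A_def D_add algebra_simps)
lemma A_cst_mult: "A j (cst c * p) = cst c * A j p"
  unfolding A_def D_cst_mult by (simp add: algebra_simps)
lemma A_0: "A j 0 = 0" by (simp add: A_def D_0)
lemma A_diff: "A j (p - q) = A j p - A j q"
  using A_add[of j "p - q" q] by simp
lemma A_uminus: "A j (- p) = - A j p"
  using A_diff[of j 0 p] by (simp add: A_0)
lemma A_sum: "A j (sum f S) = (\<Sum>k\<in>S. A j (f k))"
  by (induction S rule: infinite_finite_induct) (simp_all add: A_0 A_add)

lemma B_add: "B j (p + q) = B j p + B j q"
  by (simp add: B_def A_add distrib_left)
lemma B_cst_mult: "B j (cst c * p) = cst c * B j p"
  by (simp add: B_def A_cst_mult mult.left_commute)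
lemma B_0: "B j 0 = 0" by (simp add: B_def A_0)
lemma B_diff: "B j (p - q) = B j p - B j q"
  using B_add[of j "p - q" q] by simp
lemma B_sum: "B j (sum f S) = (\<Sum>k\<in>S. B j (f k))"
  by (induction S rule: infinite_finite_induct) (simp_all add: B_0 B_add)

lemma A_var_mult: "A j (var l * p) = var l * A j p - cB j l p"
  unfolding A_def D_var_mult by (simp add: algebra_simps)

lemma D_A: assumes "j < N" "l < N" shows "D j (A l p) = A l (D j p) + cst 2 * cB j l p"
proof -
  have "D j (A l p) = cst 2 * (var l * D j p + cB j l p) - D j (D l p)"
    unfolding A_def D_diff D_cst_mult D_var_mult ..
  also have "\<dots> = A l (D j p) + cst 2 * cB j l p"
    unfolding A_def D_comm[OF assms] by (simp add: algebra_simps)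
  finally show ?thesis .
qed

lemma A_comm: assumes "j < N" "l < N" shows "A j (A l p) = A l (A j p)"
proof (cases "j = l")
  case True then show ?thesis by simp
next
  case False
  have c: "cB j l p = cB l j p"
    using False assms by (simp add: cB_other rv_sym swapv_sym)
  have e1: "A j (A l p) = cst 2 * (var l * (cst 2 * (var j * p) - D j p) - cB j l p) - (cst 2 * (var j * D l p) - D j (D l p))"
    by (simp only: A_def[of l] A_diff A_cst_mult A_var_mult) (simp only: A_def[of j])
  have e2: "A l (A j p) = cst 2 * (var j * (cst 2 * (var l * p) - D l p) - cB l j p) - (cst 2 * (var l * D j p) - D l (D j p))"
    by (simp only: A_def[of j] A_diff A_cst_mult A_var_mult) (simp only: A_def[of l])
  show ?thesis unfolding e1 e2 c D_comm[OF assms] by (simp add: algebra_simps)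
qed

lemma B_comm: assumes "j < N" "l < N" shows "B j (B l p) = B l (B j p)"
  unfolding B_def A_cst_mult A_comm[OF assms(1,2), of "A l _"] A_comm[OF assms(1,2)]
  by (simp add: mult.left_commute A_comm[OF assms(1,2)])

lemma swap_A: "a < N \<Longrightarrow> b < N \<Longrightarrow> swapv a b (A j p) = A (tau a b j) (swapv a b p)"
  unfolding A_def by (simp add: hom_diff[OF hom_swapv] hom_cst_mult[OF hom_swapv] hom_var_mult[OF hom_swapv]
     swapv_var swap_D)

lemma flip_A: "flipv a (A j p) = cst (if a = j then -1 else 1) * A j (flipv a p)"
  unfolding A_def
  by (simp add: hom_diff[OF hom_flipv] hom_cst_mult[OF hom_flipv] hom_var_mult[OF hom_flipv]
     flipv_var flip_D right_diff_distrib cst_uminus)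

lemma rv_A: assumes "j \<noteq> k" "j < N" "k < N"
  shows "rv j k (A l p) = cst (if l = j \<or> l = k then -1 else 1) * A (tau j k l) (rv j k p)"
proof -
  have "rv j k (A l p) = flipv j (flipv k (A (tau j k l) (swapv j k p)))"
    unfolding rv_def swap_A[OF assms(2,3)] ..
  also have "\<dots> = cst (if k = tau j k l then -1 else 1) * (cst (if j = tau j k l then -1 else 1) * A (tau j k l) (rv j k p))"
    unfolding flip_A hom_cst_mult[OF hom_flipv] rv_def ..
  also have "\<dots> = cst (if l = j \<or> l = k then -1 else 1) * A (tau j k l) (rv j k p)"
    using assms(1) by (auto simp: tau_def cst_mult mult.assoc[symmetric])
  finally show ?thesis .
qed

lemma swap_B: "a < N \<Longrightarrow> b < N \<Longrightarrow> swapv a b (B j p) = B (tau a b j) (swapv a b p)"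
  unfolding B_def by (simp add: hom_cst_mult[OF hom_swapv] swap_A)

lemma rv_B: assumes "j \<noteq> k" "j < N" "k < N"
  shows "rv j k (B l p) = B (tau j k l) (rv j k p)"
  unfolding B_def hom_cst_mult[OF hom_rv] rv_A[OF assms] A_cst_mult
  by (simp add: mult.left_commute cst_mult)

lemma flip_B: "flipv a (B j p) = B j (flipv a p)"
  unfolding B_def hom_cst_mult[OF hom_flipv] flip_A A_cst_mult
  by (simp add: mult.left_commute cst_mult)

lemma even_B: "even_p N q \<Longrightarrow> even_p N (B j q)"
  by (simp add: even_p_def flip_B)

end


lemma cst_mult2: "cst a * (cst b * x) = cst (a * b) * x"
  by (simp add: mult.assoc[symmetric] cst_mult)

lemma lookup_mult_cst: "Poly_Mapping.lookup (p * cst c) m = c * Poly_Mapping.lookup p m"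
  by (simp add: mult.commute[of p] lookup_cst_mult)

lemma lookup_numeral_mult: "Poly_Mapping.lookup (numeral n * (p::mpoly)) m = numeral n * Poly_Mapping.lookup p m"
  using lookup_cst_mult[of "numeral n" p m] by (simp add: cst_numeral)

lemmas lk_simps = lookup_add lookup_minus lookup_cst_mult lookup_mult_cst lookup_sum lookup_uminus lookup_numeral_mult

context dk begin

definition cA :: "nat \<Rightarrow> nat \<Rightarrow> op" where
  "cA j l q = (if l = j then q + cb * (\<Sum>k\<in>Kset N j. swapv j k q) else if l < N then - (cb * swapv j l q) else 0)"

lemma L3: "l \<noteq> j \<Longrightarrow> l < N \<Longrightarrow> j < N \<Longrightarrow> even_p N q \<Longrightarrow> cB j l q = 0"
  by (simp add: cB_other even_rv)

lemma L4: assumes "l \<noteq> j" "l < N" "j < N" "even_p N q"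
  shows "cB j l (A l q) = - (cst 2 * cb * A j (swapv j l q))"
proof -
  have "rv j l (A l q) = - A j (swapv j l q)"
    using rv_A[of j l l q] assms by (simp add: tau_def even_rv cst_uminus)
  moreover have "swapv j l (A l q) = A j (swapv j l q)"
    using swap_A[of j l l q] assms by (simp add: tau_def)
  ultimately have "cB j l (A l q) = cb * (- A j (swapv j l q) - A j (swapv j l q))"
    using assms by (simp add: cB_other)
  also have "\<dots> = - (cst 2 * cb * A j (swapv j l q))"
    by (rule poly_mapping_eqI) (simp add: lk_simps algebra_simps)
  finally show ?thesis .
qed

lemma Sj_even: assumes "j < N" "even_p N q"
  shows "Sj j q = cst 2 * (\<Sum>m\<in>Kset N j. swapv j m q)"
  unfolding Sj_def sum_distrib_left
  by (rule sum.cong) (use assms in \<open>auto simp: Kset_def even_rv cst_numeral\<close>)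

lemma L5: assumes "j < N" "even_p N q"
  shows "cB j j q = cst (1 + 2 * \<gamma>) * q + cst 2 * cb * (\<Sum>m\<in>Kset N j. swapv j m q)"
proof -
  have "flipv j q = q" using assms by (simp add: even_p_def)
  then show ?thesis unfolding cB_jj Sj_even[OF assms]
    by (simp add: algebra_simps cst_add cst_mult)
qed

lemma L6: assumes "j < N" "even_p N q"
  shows "cB j j (A j q) = cst (1 - 2 * \<gamma>) * A j q"
proof -
  have "Sj j (A j q) = (\<Sum>m\<in>Kset N j. A m (swapv j m q) - A m (swapv j m q))"
    unfolding Sj_def
  proof (rule sum.cong)
    fix m assume "m \<in> Kset N j"
    then have m: "m < N" "m \<noteq> j" by (auto simp: Kset_def)
    have "swapv j m (A j q) = A m (swapv j m q)"
      using swap_A[of j m j q] assms m by (simp add: tau_def)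
    moreover have "rv j m (A j q) = - A m (swapv j m q)"
      using rv_A[of j m j q] assms m by (simp add: tau_def even_rv cst_uminus)
    ultimately show "swapv j m (A j q) + rv j m (A j q) = A m (swapv j m q) - A m (swapv j m q)" by simp
  qed simp
  moreover have "flipv j (A j q) = - A j q"
    using flip_A[of j j q] assms by (simp add: even_p_def cst_uminus)
  ultimately show ?thesis unfolding cB_jj
    by (simp add: algebra_simps cst_diff cst_mult)
qed

lemma P1ne: assumes "l \<noteq> j" "l < N" "j < N" "even_p N q"
  shows "A j (D j (A l (A l q))) = A l (A l (A j (D j q))) - cst 4 * cb * A j (A j (swapv j l q))"
proof -
  have "D j (A l q) = A l (D j q)"
    using D_A[OF assms(3,2), of q] L3[OF assms] by simp
  then have "D j (A l (A l q)) = A l (A l (D j q)) + cst 2 * cB j l (A l q)"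
    using D_A[OF assms(3,2), of "A l q"] by simp
  also have "\<dots> = A l (A l (D j q)) - cst 4 * cb * A j (swapv j l q)"
    unfolding L4[OF assms] by (rule poly_mapping_eqI) (simp add: lk_simps algebra_simps)
  finally have "A j (D j (A l (A l q))) = A j (A l (A l (D j q))) - cst 4 * cb * A j (A j (swapv j l q))"
    by (simp add: A_diff A_cst_mult mult.assoc)
  then show ?thesis by (simp add: A_comm[OF assms(3,2)])
qed

lemma P1eq: assumes "j < N" "even_p N q"
  shows "A j (D j (A j (A j q))) = A j (A j (A j (D j q))) + cst 4 * A j (A j q)
     + cst 4 * cb * (\<Sum>m\<in>Kset N j. A j (A j (swapv j m q)))"
proof -
  have "D j (A j q) = A j (D j q) + cst 2 * cB j j q"
    using D_A[OF assms(1,1), of q] by simp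
  then have "D j (A j (A j q)) = A j (A j (D j q) + cst 2 * cB j j q) + cst 2 * cB j j (A j q)"
    using D_A[OF assms(1,1), of "A j q"] by simp
  also have "\<dots> = A j (A j (D j q)) + cst 2 * (cst (1 + 2 * \<gamma>) * A j q + cst 2 * cb * (\<Sum>m\<in>Kset N j. A j (swapv j m q)))
     + cst 2 * (cst (1 - 2 * \<gamma>) * A j q)"
    unfolding L5[OF assms] L6[OF assms] A_add A_cst_mult A_sum mult.assoc ..
  also have "\<dots> = A j (A j (D j q)) + cst 4 * A j q + cst 4 * cb * (\<Sum>m\<in>Kset N j. A j (swapv j m q))"
    by (rule poly_mapping_eqI) (simp add: lk_simps algebra_simps)
  finally have "D j (A j (A j q)) = \<dots>" .
  then show ?thesis
    by (simp add: A_add A_cst_mult A_sum mult.assoc)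
qed

lemma H_B: assumes "j < N" "l < N" "even_p N q"
  shows "H j (B l q) = B l (H j q) + B j (cA j l q)
     + cb * (\<Sum>k<j. B (tau j k l) (swapv j k q) - B l (swapv j k q))"
proof -
  have kN: "k < j \<Longrightarrow> k < N" for k using assms by simp
  have s1: "(\<Sum>k<j. swapv j k (B l q) + rv j k (B l q)) = (\<Sum>k<j. cst 2 * B (tau j k l) (swapv j k q))"
  proof (rule sum.cong)
    fix k assume "k \<in> {..<j}"
    then have k: "k < j" "k < N" using assms by auto
    have a: "rv j k (B l q) = B (tau j k l) (swapv j k q)"
      using rv_B[of j k l q] even_rv[of j N k q] assms k by simp
    have b: "swapv j k (B l q) = B (tau j k l) (swapv j k q)"
      using swap_B[of j k l q] assms k by simp
    show "swapv j k (B l q) + rv j k (B l q) = cst 2 * B (tau j k l) (swapv j k q)"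
      unfolding a b cst_numeral mult_2 ..
  qed simp
  have s2: "(\<Sum>k<j. B l (swapv j k q) + B l (rv j k q)) = (\<Sum>k<j. cst 2 * B l (swapv j k q))"
  proof (rule sum.cong)
    fix k assume "k \<in> {..<j}"
    then have a: "rv j k q = swapv j k q" using assms even_rv[of j N k q] by simp
    show "B l (swapv j k q) + B l (rv j k q) = cst 2 * B l (swapv j k q)"
      unfolding a cst_numeral mult_2 ..
  qed simp
  have HB: "H j (B l q) = cst (1/16) * A j (D j (A l (A l q))) + cst (1/2) * cb * (\<Sum>k<j. cst 2 * B (tau j k l) (swapv j k q))"
    unfolding H_def s1[symmetric] unfolding B_def[of l q] D_cst_mult A_cst_mult
    by (simp add: cst_mult2)
  have BH: "B l (H j q) = cst (1/16) * A l (A l (A j (D j q))) + cst (1/2) * cb * (\<Sum>k<j. cst 2 * B l (swapv j k q))"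
    unfolding H_def mult.assoc B_add B_cst_mult B_sum s2[symmetric]
    unfolding B_def[of l "A j (D j q)"] by (simp add: cst_mult2)
  show ?thesis
  proof (cases "l = j")
    case True
    have cAe: "B j (cA j l q) = cst (1/4) * A j (A j q) + cb * (\<Sum>m\<in>Kset N j. cst (1/4) * A j (A j (swapv j m q)))"
      unfolding cA_def True if_P[OF refl] B_add B_cst_mult B_sum unfolding B_def ..
    show ?thesis
      unfolding HB BH cAe unfolding True P1eq[OF assms(1,3)]
      by (rule poly_mapping_eqI) (simp add: lk_simps
          algebra_simps sum_distrib_left sum_subtractf sum.distrib)
  next
    case False
    have cAe: "B j (cA j l q) = - (cb * (cst (1/4) * A j (A j (swapv j l q))))"
      unfolding cA_def if_not_P[OF False] if_P[OF assms(2)] B_def A_uminus A_cst_mult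
      by (rule poly_mapping_eqI) (simp add: lk_simps)
    show ?thesis
      unfolding HB BH cAe P1ne[OF False assms(2,1,3)]
      by (rule poly_mapping_eqI) (simp add: lk_simps
          algebra_simps sum_distrib_left sum_subtractf sum.distrib)
  qed
qed

end


lemma vars_in_add: "vars_in V p \<Longrightarrow> vars_in V q \<Longrightarrow> vars_in V (p + q)"
  unfolding vars_in_def using keys_add[of p q] by blast

lemma keys_cst_mult: "Poly_Mapping.keys (cst c * p) \<subseteq> Poly_Mapping.keys p"
  by (auto simp: in_keys_iff lookup_cst_mult)

lemma vars_in_cst_mult: "vars_in V p \<Longrightarrow> vars_in V (cst c * p)"
  unfolding vars_in_def using keys_cst_mult[of c p] by blast

lemma vars_in_cst: "vars_in V (cst c)"
  by (auto simp: vars_in_def cst_def)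

lemma vars_in_0: "vars_in V 0" using vars_in_cst[of V 0] by simp

lemma vars_in_uminus: "vars_in V p \<Longrightarrow> vars_in V (- p)"
  using vars_in_cst_mult[of V p "-1"] by (simp add: cst_uminus)

lemma vars_in_diff: "vars_in V p \<Longrightarrow> vars_in V q \<Longrightarrow> vars_in V (p - q)"
  using vars_in_add[of V p "- q"] vars_in_uminus[of V q] by simp

lemma vars_in_sum: "(\<And>k. k \<in> S \<Longrightarrow> vars_in V (f k)) \<Longrightarrow> vars_in V (sum f S)"
  by (induction S rule: infinite_finite_induct) (auto simp: vars_in_0 vars_in_add)

lemma vars_in_var_mult: assumes "l \<in> V" "vars_in V p" shows "vars_in V (var l * p)"
  unfolding vars_in_def
proof
  fix m assume "m \<in> Poly_Mapping.keys (var l * p)"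
  then have m: "0 < Poly_Mapping.lookup m l" "m - Poly_Mapping.single l 1 \<in> Poly_Mapping.keys p"
    by (auto simp: in_keys_iff lookup_var_mult split: if_splits)
  then have km: "Poly_Mapping.keys (m - Poly_Mapping.single l 1) \<subseteq> V" using assms(2) by (auto simp: vars_in_def)
  show "Poly_Mapping.keys m \<subseteq> V"
  proof
    fix x assume x: "x \<in> Poly_Mapping.keys m"
    show "x \<in> V"
    proof (cases "x = l")
      case True then show ?thesis using assms(1) by simp
    next
      case False
      then have "x \<in> Poly_Mapping.keys (m - Poly_Mapping.single l 1)"
        using x by (simp add: in_keys_iff lookup_minus lookup_single)
      then show ?thesis using km by blast
    qed
  qed
qed

lemma vars_in_swap: assumes "a \<in> V" "b \<in> V" "vars_in V p" shows "vars_in V (swapv a b p)"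
  using assms(3)
proof (induction p rule: mpoly_induct)
  case (cst c) then show ?case by (simp add: hom_cst[OF hom_swapv] vars_in_cst)
next
  case (add p q) then show ?case by (simp add: hom_add[OF hom_swapv] vars_in_add)
next
  case (var l p)
  have "tau a b l \<in> V" using assms var by (auto simp: tau_def)
  then show ?case using var by (simp add: hom_var_mult[OF hom_swapv] swapv_var vars_in_var_mult)
qed

context dk begin

abbreviation "sig \<equiv> sigmaB \<beta> \<gamma> N"

lemma sqrt2_sq: "(1 / complex_of_real (sqrt 2)) * (1 / complex_of_real (sqrt 2)) = 1 / 2"
proof -
  have "complex_of_real (sqrt 2) * complex_of_real (sqrt 2) = 2"
    by (simp add: of_real_mult[symmetric])
  then show ?thesis by (simp add: field_simps)
qed

lemma s2_mult: "cst (1 / complex_of_real (sqrt 2)) * (cst (1 / complex_of_real (sqrt 2)) * X) = cst (1/2) * X"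
  by (simp only: cst_mult2 sqrt2_sq)

lemma bdag_eq: "bdag \<beta> \<gamma> N j p = cst (1 / complex_of_real (sqrt 2)) * A j p"
  unfolding bdag_def A_def by (simp add: algebra_simps)

lemma bann_eq: "bann \<beta> \<gamma> N j p = cst (1 / complex_of_real (sqrt 2)) * D j p"
  unfolding bann_def ..

lemma Bsq_eq: "Bsq \<beta> \<gamma> N j = B j"
proof
  fix p
  show "Bsq \<beta> \<gamma> N j p = B j p"
    unfolding Bsq_def bdag_eq A_cst_mult s2_mult B_def
    by (rule poly_mapping_eqI) (simp add: lk_simps)
qed

lemma htB_eq: "cst (1/2) * htB \<beta> \<gamma> N j p = H j p"
  unfolding htB_def bdag_eq bann_eq A_cst_mult s2_mult H_def rv_def[symmetric]
  by (rule poly_mapping_eqI) (simp add: lk_simps algebra_simps)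

definition F :: "nat list \<Rightarrow> (nat \<Rightarrow>\<^sub>0 nat) \<Rightarrow> op" where
  "F L m = foldr (\<lambda>j acc. (B j ^^ Poly_Mapping.lookup m j) \<circ> acc) L id"

lemma mono_op_eq: "mono_op \<beta> \<gamma> N m = F [0..<N] m"
  unfolding mono_op_def F_def Bsq_eq ..

lemma F_cong: "(\<And>j. j \<in> set L \<Longrightarrow> Poly_Mapping.lookup m j = Poly_Mapping.lookup m' j) \<Longrightarrow> F L m = F L m'"
  by (induction L) (auto simp: F_def)

lemma B_funpow_comm: "i < N \<Longrightarrow> k < N \<Longrightarrow> B k ((B i ^^ n) x) = (B i ^^ n) (B k x)"
  by (induction n) (simp_all add: B_comm)

lemma F_Suc: "distinct L \<Longrightarrow> set L \<subseteq> {..<N} \<Longrightarrow> k \<in> set L \<Longrightarrow>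
   F L (m + Poly_Mapping.single k 1) x = B k (F L m x)"
proof (induction L arbitrary: x)
  case Nil then show ?case by simp
next
  case (Cons i L)
  show ?case
  proof (cases "i = k")
    case True
    then have "k \<notin> set L" using Cons.prems by auto
    then have "F L (m + Poly_Mapping.single k 1) = F L m"
      by (intro F_cong) (auto simp: lookup_add lookup_single when_def)
    then show ?thesis using True
      by (simp add: F_def lookup_add)
  next
    case False
    then have "k \<in> set L" "distinct L" "set L \<subseteq> {..<N}" using Cons.prems by auto
    then have IH: "F L (m + Poly_Mapping.single k 1) y = B k (F L m y)" for y using Cons.IH by blast
    have "i < N" "k < N" using Cons.prems by auto
    then show ?thesis using False IH
      by (simp add: F_def lookup_add lookup_single B_funpow_comm)
  qed
qed

lemma F_0: "F L 0 x = x"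
  by (induction L) (simp_all add: F_def)

lemma sig_sum: assumes "finite S" "Poly_Mapping.keys f \<subseteq> S"
  shows "sig f = (\<Sum>m\<in>S. cst (Poly_Mapping.lookup f m) * mono_op \<beta> \<gamma> N m 1)"
  unfolding sigmaB_def
  by (rule sum.mono_neutral_left[OF assms(1,2)]) (auto simp: in_keys_iff)

lemma sig_add: "sig (p + q) = sig p + sig q"
proof -
  let ?S = "Poly_Mapping.keys p \<union> Poly_Mapping.keys q"
  have "Poly_Mapping.keys (p + q) \<subseteq> ?S" by (rule keys_add)
  then show ?thesis
    by (simp add: sig_sum[of ?S] lookup_add cst_add distrib_right sum.distrib)
qed

lemma sig_cst_mult: "sig (cst c * p) = cst c * sig p"
  by (simp add: sig_sum[of "Poly_Mapping.keys p" "cst c * p"] keys_cst_mult sig_sum[of "Poly_Mapping.keys p" p]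
      lookup_cst_mult cst_mult[symmetric] sum_distrib_left mult.assoc)

lemma sig_0: "sig 0 = 0" by (simp add: sigmaB_def)

lemma sig_uminus: "sig (- p) = - sig p"
  using sig_cst_mult[of "-1" p] by (simp add: cst_uminus)

lemma sig_diff: "sig (p - q) = sig p - sig q"
  using sig_add[of p "- q"] sig_uminus[of q] by simp

lemma sig_sum_op: "sig (sum f S) = (\<Sum>k\<in>S. sig (f k))"
  by (induction S rule: infinite_finite_induct) (simp_all add: sig_0 sig_add)

lemma sig_cst: "sig (cst c) = cst c"
proof -
  have "Poly_Mapping.keys (cst c) \<subseteq> {0}" by (simp add: cst_def)
  then show ?thesis by (simp add: sig_sum[of "{0}"] mono_op_eq F_0) (simp add: cst_def)
qed

lemma sig_var: assumes "k < N" shows "sig (var k * p) = B k (sig p)"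
proof -
  let ?e = "Poly_Mapping.single k (1::nat)"
  have inj: "inj_on (\<lambda>m. m + ?e) (Poly_Mapping.keys p)" by (rule inj_onI) simp
  have ke: "Poly_Mapping.keys (var k * p) \<subseteq> (\<lambda>m. m + ?e) ` Poly_Mapping.keys p"
  proof
    fix m assume "m \<in> Poly_Mapping.keys (var k * p)"
    then have m: "0 < Poly_Mapping.lookup m k" "m - ?e \<in> Poly_Mapping.keys p"
      by (auto simp: in_keys_iff lookup_var_mult split: if_splits)
    have "m = (m - ?e) + ?e"
      using m(1) by (intro poly_mapping_eqI) (auto simp: lookup_add lookup_minus lookup_single when_def)
    then show "m \<in> (\<lambda>m. m + ?e) ` Poly_Mapping.keys p" using m(2) by blast
  qed
  have lk: "Poly_Mapping.lookup (var k * p) (m + ?e) = Poly_Mapping.lookup p m" for m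
  proof -
    have "m + ?e - ?e = m" by (rule poly_mapping_eqI) (simp add: lookup_add lookup_minus)
    then show ?thesis by (simp add: lookup_var_mult lookup_add)
  qed
  have "sig (var k * p) = (\<Sum>m\<in>(\<lambda>m. m + ?e) ` Poly_Mapping.keys p. cst (Poly_Mapping.lookup (var k * p) m) * mono_op \<beta> \<gamma> N m 1)"
    by (rule sig_sum[OF _ ke]) simp
  also have "\<dots> = (\<Sum>m\<in>Poly_Mapping.keys p. cst (Poly_Mapping.lookup p m) * B k (mono_op \<beta> \<gamma> N m 1))"
  proof -
    have fs: "F [0..<N] (m + ?e) 1 = B k (F [0..<N] m 1)" for m
      using F_Suc[of "[0..<N]" k m 1] assms by (simp add: atLeast0LessThan)
    show ?thesis unfolding sum.reindex[OF inj] o_def lk mono_op_eq fs ..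
  qed
  also have "\<dots> = B k (sig p)"
    unfolding sigmaB_def B_sum B_cst_mult ..
  finally show ?thesis .
qed

lemma sig_swap: assumes "a < N" "b < N" "in_vars N f" shows "sig (swapv a b f) = swapv a b (sig f)"
proof -
  have "vars_in {..<N} f" using assms by (simp add: in_vars_eq)
  then show ?thesis
  proof (induction f rule: mpoly_induct)
    case (cst c) then show ?case by (simp add: hom_cst[OF hom_swapv] sig_cst)
  next
    case (add p q) then show ?case by (simp add: hom_add[OF hom_swapv] sig_add)
  next
    case (var l p)
    have "tau a b l < N" using var assms by (simp add: tau_lt)
    then show ?case using var
      by (simp add: hom_var_mult[OF hom_swapv] swapv_var sig_var swap_B[OF assms(1,2)])
  qed
qed

lemma F_even: "set L \<subseteq> {..<N} \<Longrightarrow> even_p N x \<Longrightarrow> even_p N (F L m x)"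
proof (induction L arbitrary: x)
  case Nil then show ?case by (simp add: F_def)
next
  case (Cons i L)
  have "even_p N ((B i ^^ n) y)" if "even_p N y" for n y
    using that by (induction n) (simp_all add: even_B)
  then show ?case using Cons by (simp add: F_def)
qed

lemma sig_even: "even_p N (sig f)"
  unfolding sigmaB_def mono_op_eq
  by (intro even_sum even_cst_mult F_even even_1) auto

end


lemma vars_in_vardiff_mult: "a \<in> V \<Longrightarrow> b \<in> V \<Longrightarrow> vars_in V q \<Longrightarrow> vars_in V ((var a - var b) * q)"
  by (simp add: left_diff_distrib vars_in_diff vars_in_var_mult)

context dk begin

abbreviation "DAj j \<equiv> DA \<beta> N j"

lemma DA_add: "DAj j (p + q) = DAj j p + DAj j q"
  by (simp add: DA_eq pderivv_add sdd_add Kset_def sum.distrib algebra_simps)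

lemma DA_cst: "DAj j (cst c) = 0"
  by (simp add: DA_eq pderivv_cst sdd_cst Kset_def)

lemma DA_var_mult: "DAj j (var l * p) = var l * DAj j p + cA j l p"
proof -
  have sk: "(\<Sum>k\<in>Kset N j. sdd j k (var l * p))
     = var l * (\<Sum>k\<in>Kset N j. sdd j k p)
       + (\<Sum>k\<in>Kset N j. cst (if l = j then 1 else if l = k then -1 else 0) * swapv j k p)"
  proof -
    have "(\<Sum>k\<in>Kset N j. sdd j k (var l * p))
       = (\<Sum>k\<in>Kset N j. var l * sdd j k p + cst (if l = j then 1 else if l = k then -1 else 0) * swapv j k p)"
      by (rule sum.cong) (auto simp: Kset_def sdd_var_mult)
    then show ?thesis by (simp only: sum.distrib sum_distrib_left)
  qed
  have s2: "(\<Sum>k\<in>Kset N j. cst (if l = j then 1 else if l = k then -1 else 0) * swapv j k p)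
     = (if l = j then (\<Sum>k\<in>Kset N j. swapv j k p) else if l < N then - swapv j l p else 0)"
  proof (cases "l = j")
    case True then show ?thesis by simp
  next
    case False
    have "(\<Sum>k\<in>Kset N j. cst (if l = j then 1 else if l = k then -1 else 0) * swapv j k p)
        = (\<Sum>k\<in>Kset N j. if k = l then - swapv j l p else 0)"
      using False by (intro sum.cong) (auto simp: cst_uminus)
    also have "\<dots> = (if l < N then - swapv j l p else 0)"
      using False by (simp add: sum.delta' Kset_def)
    finally show ?thesis using False by simp
  qed
  show ?thesis
    unfolding DA_eq pderivv_var_mult sk s2 cA_def
    by (simp add: algebra_simps)
qed

lemma DhatA_eq: "DhatA \<beta> N j p = var j * DAj j p + cb * (\<Sum>k<j. swapv j k p)"
  by (simp add: DhatA_def)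

lemma DhatA_add: "DhatA \<beta> N j (p + q) = DhatA \<beta> N j p + DhatA \<beta> N j q"
  by (simp add: DhatA_eq DA_add hom_add[OF hom_swapv] sum.distrib algebra_simps)

lemma DhatA_cst: "DhatA \<beta> N j (cst c) = cb * (\<Sum>k<j. cst c)"
  by (simp add: DhatA_eq DA_cst hom_cst[OF hom_swapv])

lemma DhatA_var_mult: "DhatA \<beta> N j (var l * p) = var l * DhatA \<beta> N j p + var j * cA j l p
    + cb * (\<Sum>k<j. (var (tau j k l) - var l) * swapv j k p)"
proof -
  have "(\<Sum>k<j. swapv j k (var l * p)) = (\<Sum>k<j. var (tau j k l) * swapv j k p)"
    by (simp add: hom_var_mult[OF hom_swapv] swapv_var)
  also have "\<dots> = var l * (\<Sum>k<j. swapv j k p) + (\<Sum>k<j. (var (tau j k l) - var l) * swapv j k p)"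
    by (simp add: sum_distrib_left sum.distrib[symmetric] algebra_simps)
  finally have s: "(\<Sum>k<j. swapv j k (var l * p)) = \<dots>" .
  show ?thesis unfolding DhatA_eq DA_var_mult s by (simp add: algebra_simps)
qed

lemma cA_vars: assumes "j < N" "vars_in {..<N} p" shows "vars_in {..<N} (cA j l p)"
  unfolding cA_def using assms
  by (auto intro!: vars_in_add vars_in_cst_mult vars_in_sum vars_in_swap vars_in_uminus vars_in_0
      simp: Kset_def)

lemma sig_cA: assumes "j < N" "in_vars N p" shows "sig (cA j l p) = cA j l (sig p)"
proof -
  have "sig (\<Sum>k\<in>Kset N j. swapv j k p) = (\<Sum>k\<in>Kset N j. swapv j k (sig p))"
    unfolding sig_sum_op by (rule sum.cong) (use assms in \<open>auto simp: Kset_def sig_swap\<close>)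
  then show ?thesis unfolding cA_def
    using assms by (simp add: sig_add sig_cst_mult sig_uminus sig_swap sig_0)
qed

lemma main_DhatA: assumes "j < N" "in_vars N f"
  shows "in_vars N (DhatA \<beta> N j f) \<and> sig (DhatA \<beta> N j f) = H j (sig f)"
proof -
  have "vars_in {..<N} f" using assms by (simp add: in_vars_eq)
  then show ?thesis
  proof (induction f rule: mpoly_induct)
    case (cst c)
    have v: "in_vars N (DhatA \<beta> N j (cst c))"
      unfolding DhatA_cst in_vars_eq by (intro vars_in_cst_mult vars_in_sum vars_in_cst)
    have "sig (DhatA \<beta> N j (cst c)) = cb * (\<Sum>k<j. cst c)"
      unfolding DhatA_cst sig_cst_mult sig_sum_op sig_cst ..
    also have "\<dots> = H j (sig (cst c))"
    proof -
      have g: "cb * X = cst (1/4) * 0 + cst (1/2) * cb * (X + X)" for X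
        by (simp only: cst_mult mult_zero_right add_0_left, rule poly_mapping_eqI,
            simp only: lookup_cst_mult lookup_add, simp add: field_simps)
      show ?thesis
        unfolding sig_cst H_def D_cst A_0 hom_cst[OF hom_swapv] hom_cst[OF hom_rv] sum.distrib
        by (rule g)
    qed
    finally show ?case using v by simp
  next
    case (add p q)
    then show ?case
      by (simp add: DhatA_add sig_add in_vars_eq vars_in_add H_def A_add D_add hom_add[OF hom_swapv]
          hom_add[OF hom_rv] sum.distrib algebra_simps)
  next
    case (var l p)
    have l: "l < N" using var by simp
    have pv: "in_vars N p" using var by (simp add: in_vars_eq)
    have IH1: "vars_in {..<N} (DhatA \<beta> N j p)" and IH2: "sig (DhatA \<beta> N j p) = H j (sig p)"
      using var by (auto simp: in_vars_eq)
    have tl: "k < j \<Longrightarrow> tau j k l < N" for k using assms l by (auto simp: tau_def)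
    have sv: "k < j \<Longrightarrow> vars_in {..<N} (swapv j k p)" for k
      using assms var by (intro vars_in_swap) auto
    have v: "in_vars N (DhatA \<beta> N j (var l * p))"
      unfolding DhatA_var_mult in_vars_eq
      using assms l IH1 var.hyps(2) tl sv
      by (intro vars_in_add vars_in_var_mult vars_in_cst_mult vars_in_sum cA_vars vars_in_vardiff_mult) auto
    have s3: "sig (\<Sum>k<j. (var (tau j k l) - var l) * swapv j k p)
        = (\<Sum>k<j. B (tau j k l) (swapv j k (sig p)) - B l (swapv j k (sig p)))"
      unfolding sig_sum_op
    proof (rule sum.cong)
      fix k assume "k \<in> {..<j}"
      then have k: "k < j" "k < N" using assms by auto
      show "sig ((var (tau j k l) - var l) * swapv j k p) = B (tau j k l) (swapv j k (sig p)) - B l (swapv j k (sig p))"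
        unfolding left_diff_distrib sig_diff sig_var[OF tl[OF k(1)]] sig_var[OF l]
          sig_swap[OF assms(1) k(2) pv] ..
    qed simp
    have "sig (DhatA \<beta> N j (var l * p)) = B l (H j (sig p)) + B j (cA j l (sig p))
        + cb * (\<Sum>k<j. B (tau j k l) (swapv j k (sig p)) - B l (swapv j k (sig p)))"
      unfolding DhatA_var_mult sig_add sig_cst_mult s3 sig_var[OF l] sig_var[OF assms(1)] IH2
        sig_cA[OF assms(1) pv] ..
    also have "\<dots> = H j (sig (var l * p))"
      unfolding sig_var[OF l] H_B[OF assms(1) l sig_even] ..
    finally show ?case using v by simp
  qed
qed

lemma main: assumes "(Q, R) \<in> rhoB_H0 \<beta> \<gamma> N"
  shows "\<forall>f. in_vars N f \<longrightarrow> in_vars N (Q f) \<and> sig (Q f) = R (sig f)"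
  using assms
  proof (induction rule: rhoB_H0.induct)
    case (gen_D j)
    then show ?case using main_DhatA htB_eq by simp
  next
    case (gen_s i j)
    then show ?case by (simp add: sig_swap in_vars_eq vars_in_swap)
  next
    case unit then show ?case by simp
  next
    case (add Q1 R1 Q2 R2) then show ?case by (simp add: sig_add in_vars_eq vars_in_add)
  next
    case (scal Q R c) then show ?case by (simp add: sig_cst_mult in_vars_eq vars_in_cst_mult)
  next
    case (comp Q1 R1 Q2 R2) then show ?case by simp
  qed

end

theorem theorem2p9:
  fixes N \<beta> :: nat and \<gamma> :: complex and Q R :: op and f :: mpoly
  assumes "N \<ge> 1"
    and "(Q, R) \<in> rhoB_H0 \<beta> \<gamma> N"
    and "in_vars N f"
  shows "sigmaB \<beta> \<gamma> N (Q f) = R (sigmaB \<beta> \<gamma> N f)"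
  using dk.main[OF assms(2)] assms(3) by blast


end
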